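(* Let $(X,d,G)$ be a $G$-system and $Z\subset X$ a nonempty $G$-invariant subset. Then for every Følner sequence $\{F_n\}$ of $G$, $$\overline{\mathrm{mdim}}_M(G,Z,\{F_n\},d)=\limsup_{\epsilon\to0}\frac{1}{\log\frac1\epsilon}\inf_{\mathrm{diam}(\mathcal U)\le\epsilon}h_{top}(G,Z,\mathcal U),\qquad\underline{\mathrm{mdim}}_M(G,Z,\{F_n\},d)=\liminf_{\epsilon\to0}\frac{1}{\log\frac1\epsilon}\inf_{\mathrm{diam}(\mathcal U)\le\epsilon}h_{top}(G,Z,\mathcal U),$$ where the infimum is over finite open covers $\mathcal U$ of $X$. Moreover, in both formulas $\inf_{\mathrm{diam}(\mathcal U)\le\epsilon}$ may be replaced by $\sup_{\mathrm{diam}(\mathcal U)\le\epsilon,\ \mathrm{Leb}(\mathcal U)\ge\epsilon/4}$ and by $\sup_{\mathrm{Leb}(\mathcal U)\ge\epsilon/4}$.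
   Context: $G$ is a countably infinite discrete amenable group; $(X,d,G)$ a compact metric space with continuous $G$-action by homeomorphisms; $Z$ is $G$-invariant if $gZ=Z$ for all $g$. Følner: nonempty finite $F_n$ with $|gF_n\triangle F_n|/|F_n|\to0$ for all $g$. $d_F(x,y)=\max_{g\in F}d(gx,gy)$; $s(Z,d_F,\epsilon)$ maximal cardinality of a subset of $Z$ with pairwise $d_F$-distances $>\epsilon$; $\overline{\mathrm{mdim}}_M(G,Z,\{F_n\},d)=\limsup_{\epsilon\to0}\frac{1}{\log(1/\epsilon)}\limsup_n\frac1{|F_n|}\log s(Z,d_{F_n},\epsilon)$, and $\underline{\mathrm{mdim}}_M$ with $\liminf_{\epsilon\to0}$. For a finite open cover $\mathcal U$ of $X$ and finite $F\subset G$, $\mathcal U_F=\bigvee_{g\in F}g^{-1}\mathcal U$; $N(\mathcal U,Z)$ is the minimal cardinality of a subfamily of $\mathcal U$ covering $Z$; $h_{top}(G,Z,\mathcal U)=\lim_n\frac1{|F_n|}\log N(\mathcal U_{F_n},Z)$ (exists and is independent of the Følner sequence). $\mathrm{diam}(\mathcal U)$ is the maximal diameter of elements of $\mathcal U$; $\mathrm{Leb}(\mathcal U)$ is the largest $\delta>0$ such that every open ball of radius $\delta$ lies in some element of $\mathcal U$. *)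

theory Defs
  imports "HOL-Analysis.Analysis" "HOL-Library.Liminf_Limsup"
begin

text \<open>The group G is a type of class group_add (written additively, not
necessarily commutative); the space X is the whole type 'x, a compact
metric space. The action is act :: 'g => 'x => 'x.\<close>

definition folner :: "(nat \<Rightarrow> 'g::group_add set) \<Rightarrow> bool" where
  "folner F \<longleftrightarrow> (\<forall>n. finite (F n) \<and> F n \<noteq> {}) \<and>
     (\<forall>g. (\<lambda>n. real (card ((((+) g) ` F n - F n) \<union> (F n - (+) g ` F n)))
                  / real (card (F n))) \<longlonglongrightarrow> 0)"

definition bowen_dist :: "('g \<Rightarrow> 'x::metric_space \<Rightarrow> 'x) \<Rightarrow> 'g set \<Rightarrow> 'x \<Rightarrow> 'x \<Rightarrow> real" where
  "bowen_dist act F x y = Max ((\<lambda>g. dist (act g x) (act g y)) ` F)"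

definition sep_num :: "('g \<Rightarrow> 'x::metric_space \<Rightarrow> 'x) \<Rightarrow> 'x set \<Rightarrow> 'g set \<Rightarrow> real \<Rightarrow> nat" where
  "sep_num act Z F eps = Sup {card E | E. finite E \<and> E \<subseteq> Z \<and>
      (\<forall>x\<in>E. \<forall>y\<in>E. x \<noteq> y \<longrightarrow> bowen_dist act F x y > eps)}"

definition upper_mdim_M :: "('g \<Rightarrow> 'x::metric_space \<Rightarrow> 'x) \<Rightarrow> 'x set \<Rightarrow> (nat \<Rightarrow> 'g set) \<Rightarrow> ereal" where
  "upper_mdim_M act Z F = Limsup (at_right 0) (\<lambda>eps. ereal (1 / ln (1 / eps)) *
      limsup (\<lambda>n. ereal (ln (real (sep_num act Z (F n) eps)) / real (card (F n)))))"

definition lower_mdim_M :: "('g \<Rightarrow> 'x::metric_space \<Rightarrow> 'x) \<Rightarrow> 'x set \<Rightarrow> (nat \<Rightarrow> 'g set) \<Rightarrow> ereal" where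
  "lower_mdim_M act Z F = Liminf (at_right 0) (\<lambda>eps. ereal (1 / ln (1 / eps)) *
      limsup (\<lambda>n. ereal (ln (real (sep_num act Z (F n) eps)) / real (card (F n)))))"

definition open_cover :: "'x::topological_space set set \<Rightarrow> bool" where
  "open_cover U \<longleftrightarrow> finite U \<and> (\<forall>V\<in>U. open V) \<and> \<Union>U = UNIV"

definition join_cover :: "('g \<Rightarrow> 'x \<Rightarrow> 'x) \<Rightarrow> 'g set \<Rightarrow> 'x set set \<Rightarrow> 'x set set" where
  "join_cover act F U = {(\<Inter>g\<in>F. act g -` c g) | c. c \<in> F \<rightarrow> U}"

definition cover_num :: "'x set set \<Rightarrow> 'x set \<Rightarrow> nat" where
  "cover_num U Z = Inf {card V | V. V \<subseteq> U \<and> Z \<subseteq> \<Union>V}"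

definition h_top :: "('g \<Rightarrow> 'x \<Rightarrow> 'x) \<Rightarrow> (nat \<Rightarrow> 'g set) \<Rightarrow> 'x set \<Rightarrow> 'x set set \<Rightarrow> real" where
  "h_top act F Z U = lim (\<lambda>n. ln (real (cover_num (join_cover act (F n) U) Z)) / real (card (F n)))"

definition cover_diam :: "'x::metric_space set set \<Rightarrow> real" where
  "cover_diam U = Max (diameter ` U)"

definition cover_leb :: "'x::metric_space set set \<Rightarrow> ereal" where
  "cover_leb U = Sup {ereal \<delta> | \<delta>. \<delta> > 0 \<and> (\<forall>x. \<exists>V\<in>U. ball x \<delta> \<subseteq> V)}"

end

theory Submission
  imports Defs "HOL-Real_Asymp.Real_Asymp"
begin

definition rt :: "'g::group_add set \<Rightarrow> 'g \<Rightarrow> 'g set" where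
  "rt T c = (\<lambda>a. a + c) ` T"

lemma rt_card[simp]: "card (rt T c) = card T"
  unfolding rt_def by (rule card_image) (auto simp: inj_on_def)

lemma rt_finite[simp]: "finite (rt T c) = finite T"
  unfolding rt_def by (rule finite_image_iff) (auto simp: inj_on_def)

lemma rt_mem: "x \<in> rt T c \<longleftrightarrow> x + (- c) \<in> T"
  proof
  assume "x \<in> rt T c" then show "x + - c \<in> T" unfolding rt_def by (auto simp: add.assoc)
next
  assume "x + - c \<in> T"
  moreover have "x = (x + - c) + c" by (simp add: add.assoc)
  ultimately show "x \<in> rt T c" unfolding rt_def by blast
qed

lemma double_count:
  fixes T :: "'g::group_add set"
  assumes "finite T" "finite S" "finite N"
  shows "(\<Sum>c\<in>S. card (rt T c \<inter> N)) \<le> card T * card N"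
proof -
  have "(\<Sum>c\<in>S. card (rt T c \<inter> N)) = (\<Sum>c\<in>S. \<Sum>w\<in>N. if w \<in> rt T c then 1 else 0)"
    using assms by (simp add: sum.If_cases Int_commute Int_def)
  also have "\<dots> = (\<Sum>w\<in>N. \<Sum>c\<in>S. if w \<in> rt T c then 1 else 0)"
    by (rule sum.swap)
  also have "\<dots> = (\<Sum>w\<in>N. card {c\<in>S. w \<in> rt T c})"
    using assms by (simp add: sum.If_cases Int_def)
  also have "\<dots> \<le> (\<Sum>w\<in>N. card T)"
  proof (rule sum_mono)
    fix w assume "w \<in> N"
    have "{c\<in>S. w \<in> rt T c} \<subseteq> (\<lambda>t. - t + w) ` T"
    proof
      fix c assume "c \<in> {c\<in>S. w \<in> rt T c}"
      then obtain t where "t \<in> T" "w = t + c" unfolding rt_def by auto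
      then have "c = - t + w" by (simp add: add.assoc[symmetric])
      then show "c \<in> (\<lambda>t. - t + w) ` T" using \<open>t \<in> T\<close> by auto
    qed
    then show "card {c\<in>S. w \<in> rt T c} \<le> card T"
      using assms(1) by (meson card_image_le card_mono finite_imageI order_trans)
  qed
  also have "\<dots> = card T * card N" by simp
  finally show ?thesis .
qed

lemma boundary_count:
  fixes A K :: "'g::group_add set"
  assumes "finite A" "finite K"
  shows "card {c\<in>A. \<not> rt K c \<subseteq> A} \<le> (\<Sum>t\<in>K. card ((\<lambda>a. t + a) ` A - A))"
proof -
  have "{c\<in>A. \<not> rt K c \<subseteq> A} = (\<Union>t\<in>K. {c\<in>A. t + c \<notin> A})"
    unfolding rt_def by auto
  then have "card {c\<in>A. \<not> rt K c \<subseteq> A} \<le> (\<Sum>t\<in>K. card {c\<in>A. t + c \<notin> A})"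
    using card_UN_le[OF assms(2)] by simp
  also have "\<dots> \<le> (\<Sum>t\<in>K. card ((\<lambda>a. t + a) ` A - A))"
  proof (rule sum_mono)
    fix t
    have "card {c\<in>A. t + c \<notin> A} = card ((\<lambda>a. t + a) ` {c\<in>A. t + c \<notin> A})"
      by (rule card_image[symmetric]) (auto simp: inj_on_def)
    also have "\<dots> \<le> card ((\<lambda>a. t + a) ` A - A)"
      by (rule card_mono) (use assms in auto)
    finally show "card {c\<in>A. t + c \<notin> A} \<le> card ((\<lambda>a. t + a) ` A - A)" .
  qed
  finally show ?thesis .
qed

lemma greedy:
  fixes T W F :: "'g::group_add set" and \<beta> :: real
  assumes "finite F" "finite T" "T \<noteq> {}" "0 < \<beta>" "\<beta> < 1"
  obtains C where "finite C" "\<forall>c\<in>C. rt T c \<subseteq> F"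
    "(1 - \<beta>) * card T * card C \<le> card ((\<Union>c\<in>C. rt T c) - W)"
    "\<And>c. rt T c \<subseteq> F \<Longrightarrow> card (rt T c - (W \<union> (\<Union>c\<in>C. rt T c))) < (1 - \<beta>) * card T"
proof -
  obtain t0 where t0: "t0 \<in> T" using assms(3) by auto
  define Cand where "Cand = {c. rt T c \<subseteq> F}"
  have "Cand \<subseteq> (\<lambda>f. - t0 + f) ` F"
  proof
    fix c assume "c \<in> Cand"
    then have "t0 + c \<in> F" using t0 unfolding Cand_def rt_def by auto
    moreover have "c = - t0 + (t0 + c)" by (simp add: add.assoc[symmetric])
    ultimately show "c \<in> (\<lambda>f. - t0 + f) ` F" by blast
  qed
  then have finC: "finite Cand" using assms(1) finite_subset by blast
  define P where "P C \<longleftrightarrow> C \<subseteq> Cand \<and> (1 - \<beta>) * card T * card C \<le> card ((\<Union>c\<in>C. rt T c) - W)" for C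
  have "P {}" unfolding P_def by simp
  have "\<exists>C. P C \<and> (\<forall>y. P y \<longrightarrow> card y \<le> card C)"
    by (rule ex_has_greatest_nat[of P "{}" card "Suc (card Cand)"])
      (use \<open>P {}\<close> finC in \<open>auto simp: P_def intro: le_imp_less_Suc card_mono\<close>)
  then obtain C where C: "P C" "\<And>C'. P C' \<Longrightarrow> card C' \<le> card C" by blast
  have finCC: "finite C" using C(1) finC unfolding P_def using finite_subset by blast
  show ?thesis
  proof (rule that[of C])
    show "finite C" by fact
    show "\<forall>c\<in>C. rt T c \<subseteq> F" using C(1) unfolding P_def Cand_def by auto
    show "(1 - \<beta>) * card T * card C \<le> card ((\<Union>c\<in>C. rt T c) - W)" using C(1) unfolding P_def by auto
    fix c assume c: "rt T c \<subseteq> F"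
    show "card (rt T c - (W \<union> (\<Union>c\<in>C. rt T c))) < (1 - \<beta>) * card T"
    proof (rule ccontr)
      assume ge: "\<not> ?thesis"
      have "c \<notin> C"
      proof
        assume "c \<in> C"
        then have "rt T c - (W \<union> (\<Union>c\<in>C. rt T c)) = {}" by blast
        then have "real (card (rt T c - (W \<union> (\<Union>c\<in>C. rt T c)))) = 0" by (metis card.empty of_nat_0)
        moreover have "0 < (1 - \<beta>) * card T" using assms by (simp add: card_gt_0_iff)
        ultimately show False using ge by linarith
      qed
      have U: "(\<Union>c\<in>insert c C. rt T c) - W = ((\<Union>c\<in>C. rt T c) - W) \<union> (rt T c - (W \<union> (\<Union>c\<in>C. rt T c)))"
        by auto
      have "card ((\<Union>c\<in>insert c C. rt T c) - W) = card ((\<Union>c\<in>C. rt T c) - W) + card (rt T c - (W \<union> (\<Union>c\<in>C. rt T c)))"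
        unfolding U by (rule card_Un_disjoint) (use finCC assms in auto)
      moreover have "card (insert c C) = card C + 1" using \<open>c \<notin> C\<close> finCC by simp
      moreover have "(1 - \<beta>) * card T * (card C + 1) = (1 - \<beta>) * card T * card C + (1 - \<beta>) * card T"
        by (simp add: algebra_simps)
      ultimately have "(1 - \<beta>) * card T * card (insert c C) \<le> card ((\<Union>c\<in>insert c C. rt T c) - W)"
        using C(1) ge unfolding P_def by (simp only: of_nat_add) linarith
      moreover have "insert c C \<subseteq> Cand" using C(1) c unfolding P_def Cand_def by auto
      ultimately have "P (insert c C)" unfolding P_def by blast
      then have "card (insert c C) \<le> card C" by (rule C(2))
      with \<open>c \<notin> C\<close> finCC show False by simp
    qed
  qed
qed

locale ow =
  fixes \<phi> :: "'g::group_add set \<Rightarrow> real"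
  assumes sub: "finite A \<Longrightarrow> finite B \<Longrightarrow> \<phi> (A \<union> B) \<le> \<phi> A + \<phi> B"
  and inv: "finite A \<Longrightarrow> \<phi> (rt A c) = \<phi> A"
  and emp: "\<phi> {} = 0"
  and nonneg: "finite A \<Longrightarrow> 0 \<le> \<phi> A"
begin

lemma sub_UN: "finite I \<Longrightarrow> (\<And>i. i \<in> I \<Longrightarrow> finite (A i)) \<Longrightarrow> \<phi> (\<Union>i\<in>I. A i) \<le> (\<Sum>i\<in>I. \<phi> (A i))"
proof (induction I rule: finite_induct)
  case empty then show ?case by (simp add: emp)
next
  case (insert x I)
  have "\<phi> (\<Union>i\<in>insert x I. A i) = \<phi> (A x \<union> (\<Union>i\<in>I. A i))" by simp
  also have "\<dots> \<le> \<phi> (A x) + \<phi> (\<Union>i\<in>I. A i)" using insert by (intro sub) auto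
  also have "\<dots> \<le> \<phi> (A x) + (\<Sum>i\<in>I. \<phi> (A i))" using insert by simp
  finally show ?case using insert by simp
qed

lemma single: "\<phi> {g} = \<phi> {0}"
proof -
  have "{g} = rt {0} g" unfolding rt_def by simp
  then show ?thesis using inv[of "{0}" g] by simp
qed

lemma le_card: "finite A \<Longrightarrow> \<phi> A \<le> card A * \<phi> {0}"
proof -
  assume fA: "finite A"
  have "\<phi> A = \<phi> (\<Union>a\<in>A. {a})" by simp
  also have "\<dots> \<le> (\<Sum>a\<in>A. \<phi> {a})" using fA by (intro sub_UN) auto
  also have "\<dots> = (\<Sum>a\<in>A. \<phi> {0})" by (rule sum.cong) (auto intro: single)
  also have "\<dots> = card A * \<phi> {0}" by simp
  finally show ?thesis .
qed

end

context ow begin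

lemma tiling_step:
  fixes R :: "nat \<Rightarrow> 'g set" and n j :: nat and \<beta> \<gamma> :: real and Fs :: "'g set"
    and P :: "(nat \<times> 'g) set"
  assumes beta: "0 < \<beta>" "\<beta> \<le> 1/2" and gam: "0 \<le> \<gamma>"
    and Rfin: "finite (R j)" "R j \<noteq> {}" and Rall: "\<And>i. finite (R i)"
    and jn: "j < n" and tile_inv: "\<And>i. j < i \<Longrightarrow> i < n \<Longrightarrow> real (\<Sum>t\<in>R j. card ((\<lambda>a. - t + a) ` R i - R i)) \<le> \<gamma> * card (R i)"
    and Fs: "finite Fs" and F_inv: "real (\<Sum>t\<in>R j. card ((\<lambda>a. t + a) ` Fs - Fs)) \<le> \<gamma> * card Fs"
    and P: "finite P" "\<And>p. p \<in> P \<Longrightarrow> j < fst p \<and> fst p < n \<and> rt (R (fst p)) (snd p) \<subseteq> Fs"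
    and cost: "(1 - \<beta>) * (\<Sum>p\<in>P. card (R (fst p))) \<le> card (\<Union>p\<in>P. rt (R (fst p)) (snd p))"
  obtains P' where "finite P'" "\<And>p. p \<in> P' \<Longrightarrow> j \<le> fst p \<and> fst p < n \<and> rt (R (fst p)) (snd p) \<subseteq> Fs"
    "(1 - \<beta>) * (\<Sum>p\<in>P'. card (R (fst p))) \<le> card (\<Union>p\<in>P'. rt (R (fst p)) (snd p))"
    "card (Fs - (\<Union>p\<in>P'. rt (R (fst p)) (snd p))) \<le> (1 - \<beta>) * card (Fs - (\<Union>p\<in>P. rt (R (fst p)) (snd p))) + 3 * \<gamma> * card Fs"
proof -
  define W where "W = (\<Union>p\<in>P. rt (R (fst p)) (snd p))"
  define T where "T = R j"
  have WF: "W \<subseteq> Fs" using P(2) unfolding W_def by auto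
  have finW: "finite W" using WF Fs finite_subset by blast
  obtain C where C: "finite C" "\<forall>c\<in>C. rt T c \<subseteq> Fs"
    "(1 - \<beta>) * card T * card C \<le> card ((\<Union>c\<in>C. rt T c) - W)"
    "\<And>c. rt T c \<subseteq> Fs \<Longrightarrow> card (rt T c - (W \<union> (\<Union>c\<in>C. rt T c))) < (1 - \<beta>) * card T"
    using greedy[of Fs T \<beta> W] Fs Rfin beta unfolding T_def by auto
  define U where "U = (\<Union>c\<in>C. rt T c)"
  have UF: "U \<subseteq> Fs" using C(2) unfolding U_def by auto
  have finU: "finite U" using UF Fs finite_subset by blast
  define P' where "P' = P \<union> (\<lambda>c. (j, c)) ` C"
  have disj: "P \<inter> (\<lambda>c. (j, c)) ` C = {}" using P(2) by force
  have W': "(\<Union>p\<in>P'. rt (R (fst p)) (snd p)) = W \<union> U"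
    unfolding P'_def W_def U_def T_def by auto
  show ?thesis
  proof (rule that[of P'])
    show "finite P'" unfolding P'_def using P C by auto
    show "\<And>p. p \<in> P' \<Longrightarrow> j \<le> fst p \<and> fst p < n \<and> rt (R (fst p)) (snd p) \<subseteq> Fs"
      using P(2) C(2) jn unfolding P'_def T_def by force
    have "(\<Sum>p\<in>P'. card (R (fst p))) = (\<Sum>p\<in>P. card (R (fst p))) + (\<Sum>p\<in>(\<lambda>c. (j, c)) ` C. card (R (fst p)))"
      unfolding P'_def by (rule sum.union_disjoint) (use P C disj in auto)
    also have "(\<Sum>p\<in>(\<lambda>c. (j, c)) ` C. card (R (fst p))) = card C * card T"
      by (subst sum.reindex) (auto simp: inj_on_def T_def)
    finally have sumP': "(\<Sum>p\<in>P'. card (R (fst p))) = (\<Sum>p\<in>P. card (R (fst p))) + card C * card T" .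
    have cardWU: "card (W \<union> U) = card W + card (U - W)"
    proof -
      have "card (W \<union> (U - W)) = card W + card (U - W)" by (rule card_Un_disjoint) (use finW finU in auto)
      then show ?thesis by (simp add: Un_Diff_cancel)
    qed
    have "(1 - \<beta>) * (\<Sum>p\<in>P'. card (R (fst p))) = (1 - \<beta>) * (\<Sum>p\<in>P. card (R (fst p))) + (1 - \<beta>) * card T * card C"
      unfolding sumP' by (simp add: algebra_simps)
    also have "\<dots> \<le> card W + card (U - W)"
      using cost C(3) unfolding W_def U_def by linarith
    also have "\<dots> = card (\<Union>p\<in>P'. rt (R (fst p)) (snd p))" unfolding W' cardWU by simp
    finally show "(1 - \<beta>) * (\<Sum>p\<in>P'. card (R (fst p))) \<le> card (\<Union>p\<in>P'. rt (R (fst p)) (snd p))" .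
    obtain t0 where t0: "t0 \<in> T" using Rfin unfolding T_def by auto
    define I where "I = {c. rt T c \<subseteq> Fs - W}"
    have "I \<subseteq> (\<lambda>f. - t0 + f) ` Fs"
    proof
      fix c assume "c \<in> I"
      then have "t0 + c \<in> Fs" using t0 unfolding I_def rt_def by auto
      moreover have "c = - t0 + (t0 + c)" by (simp add: add.assoc[symmetric])
      ultimately show "c \<in> (\<lambda>f. - t0 + f) ` Fs" by blast
    qed
    then have finI: "finite I" using Fs finite_subset by blast
    have big: "\<beta> * card T < card (rt T c \<inter> (U - W))" if "c \<in> I" for c
    proof -
      have sub1: "rt T c \<subseteq> Fs" "rt T c \<inter> W = {}" using that unfolding I_def by auto
      have eq: "(rt T c \<inter> (U - W)) \<union> (rt T c - (W \<union> U)) = rt T c" using sub1 by auto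
      have "card ((rt T c \<inter> (U - W)) \<union> (rt T c - (W \<union> U))) = card (rt T c \<inter> (U - W)) + card (rt T c - (W \<union> U))"
        by (rule card_Un_disjoint) (use Rfin in \<open>auto simp: T_def\<close>)
      then have "card (rt T c) = card (rt T c \<inter> (U - W)) + card (rt T c - (W \<union> U))"
        unfolding eq .
      then have "card T = card (rt T c \<inter> (U - W)) + card (rt T c - (W \<union> U))" by simp
      moreover have "card (rt T c - (W \<union> U)) < (1 - \<beta>) * card T" using C(4)[OF sub1(1)] unfolding U_def .
      ultimately show ?thesis by (simp add: algebra_simps)
    qed
    have cardT: "0 < card T" using Rfin unfolding T_def by (simp add: card_gt_0_iff)
    have "\<beta> * card T * card I \<le> (\<Sum>c\<in>I. real (card (rt T c \<inter> (U - W))))"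
    proof -
      have "(\<Sum>c\<in>I. \<beta> * card T) \<le> (\<Sum>c\<in>I. real (card (rt T c \<inter> (U - W))))"
        by (rule sum_mono) (use big in \<open>auto intro: less_imp_le\<close>)
      then show ?thesis by (simp add: mult.commute)
    qed
    also have "\<dots> \<le> card T * card (U - W)"
    proof -
      have "(\<Sum>c\<in>I. card (rt T c \<inter> (U - W))) \<le> card T * card (U - W)"
        by (rule double_count) (use Rfin finI finU in \<open>auto simp: T_def\<close>)
      then show ?thesis by (metis of_nat_le_iff of_nat_mult of_nat_sum)
    qed
    finally have betaI: "\<beta> * card I \<le> card (U - W)" using cardT by (simp add: mult.commute mult.left_commute)
    define B1 where "B1 = {c\<in>Fs. \<not> rt T c \<subseteq> Fs}"
    define B2 where "B2 = (\<Union>p\<in>P. \<Union>t\<in>T. rt ((\<lambda>a. - t + a) ` R (fst p) - R (fst p)) (snd p))"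
    have badsub: "Fs - W \<subseteq> I \<union> B1 \<union> B2"
    proof
      fix c assume c: "c \<in> Fs - W"
      show "c \<in> I \<union> B1 \<union> B2"
      proof (cases "rt T c \<subseteq> Fs - W")
        case True then show ?thesis unfolding I_def by auto
      next
        case False
        show ?thesis
        proof (cases "rt T c \<subseteq> Fs")
          case False then show ?thesis using c unfolding B1_def by auto
        next
          case True
          with \<open>\<not> rt T c \<subseteq> Fs - W\<close> obtain t where t: "t \<in> T" "t + c \<in> W" unfolding rt_def by auto
          then obtain p where p: "p \<in> P" "t + c \<in> rt (R (fst p)) (snd p)" unfolding W_def by auto
          have cnot: "c \<notin> rt (R (fst p)) (snd p)" using c p unfolding W_def by auto
          have "c + - snd p \<in> (\<lambda>a. - t + a) ` R (fst p) - R (fst p)"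
          proof
            have "t + c + - snd p \<in> R (fst p)" using p(2) by (simp add: rt_mem)
            moreover have "c + - snd p = - t + (t + c + - snd p)" by (simp only: add.assoc[symmetric] add.left_inverse add_0_left)
            ultimately show "c + - snd p \<in> (\<lambda>a. - t + a) ` R (fst p)" by blast
            show "c + - snd p \<notin> R (fst p)" using cnot by (simp add: rt_mem)
          qed
          then have "c \<in> rt ((\<lambda>a. - t + a) ` R (fst p) - R (fst p)) (snd p)" by (simp add: rt_mem)
          then show ?thesis using p(1) t(1) unfolding B2_def by blast
        qed
      qed
    qed
    have finB: "finite B1" "finite B2" using Fs P Rall Rfin unfolding B1_def B2_def T_def by auto
    have "card (Fs - W) \<le> card (I \<union> B1 \<union> B2)" by (rule card_mono) (use finI finB badsub in auto)
    moreover have "card (I \<union> B1 \<union> B2) \<le> card (I \<union> B1) + card B2" by (rule card_Un_le)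
    moreover have "card (I \<union> B1) \<le> card I + card B1" by (rule card_Un_le)
    ultimately have "card (Fs - W) \<le> card I + card B1 + card B2" by linarith
    moreover have "card B1 \<le> \<gamma> * card Fs"
    proof -
      have "card B1 \<le> (\<Sum>t\<in>T. card ((\<lambda>a. t + a) ` Fs - Fs))" unfolding B1_def
        by (rule boundary_count) (use Fs Rfin in \<open>auto simp: T_def\<close>)
      then have "real (card B1) \<le> real (\<Sum>t\<in>T. card ((\<lambda>a. t + a) ` Fs - Fs))" by (simp only: of_nat_le_iff)
      then show ?thesis using F_inv unfolding T_def by linarith
    qed
    moreover have "card B2 \<le> 2 * \<gamma> * card Fs"
    proof -
      have "card B2 \<le> (\<Sum>p\<in>P. card (\<Union>t\<in>T. rt ((\<lambda>a. - t + a) ` R (fst p) - R (fst p)) (snd p)))"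
        unfolding B2_def by (rule card_UN_le) (use P in auto)
      also have "\<dots> \<le> (\<Sum>p\<in>P. \<Sum>t\<in>T. card ((\<lambda>a. - t + a) ` R (fst p) - R (fst p)))"
        by (rule sum_mono, rule order_trans[OF card_UN_le]) (use Rfin in \<open>auto simp: T_def\<close>)
      finally have "real (card B2) \<le> real (\<Sum>p\<in>P. (\<Sum>t\<in>T. card ((\<lambda>a. - t + a) ` R (fst p) - R (fst p))))"
        by (simp only: of_nat_le_iff)
      also have "\<dots> = (\<Sum>p\<in>P. real (\<Sum>t\<in>T. card ((\<lambda>a. - t + a) ` R (fst p) - R (fst p))))"
        by (rule of_nat_sum)
      also have "\<dots> \<le> (\<Sum>p\<in>P. \<gamma> * card (R (fst p)))"
        by (rule sum_mono) (use tile_inv P(2) in \<open>auto simp: T_def\<close>)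
      also have "\<dots> = \<gamma> * (\<Sum>p\<in>P. card (R (fst p)))" by (simp add: sum_distrib_left)
      also have "\<dots> \<le> \<gamma> * (card W / (1 - \<beta>))"
      proof -
        have "(\<Sum>p\<in>P. card (R (fst p))) \<le> card W / (1 - \<beta>)"
          using cost beta unfolding W_def by (simp add: field_simps)
        then show ?thesis using gam by (rule mult_left_mono)
      qed
      also have "\<dots> \<le> \<gamma> * (2 * card Fs)"
      proof -
        have "card W \<le> card Fs" using WF Fs card_mono by blast
        then have h1: "real (card W) \<le> real (card Fs)" by simp
        have "(\<beta> * 2) * real (card Fs) \<le> 1 * real (card Fs)" by (rule mult_right_mono) (use beta in auto)
        moreover have "2 * card Fs * (1 - \<beta>) = 2 * card Fs - (\<beta> * 2) * card Fs" by (simp add: algebra_simps)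
        ultimately have "card W \<le> 2 * card Fs * (1 - \<beta>)" using h1 by linarith
        then have "card W / (1 - \<beta>) \<le> 2 * card Fs" using beta by (subst pos_divide_le_eq) auto
        then show ?thesis using gam by (rule mult_left_mono)
      qed
      finally show ?thesis by simp
    qed
    ultimately have badb: "card (Fs - W) \<le> card I + 3 * \<gamma> * card Fs" by linarith
    have eq2: "(Fs - (W \<union> U)) \<union> (U - W) = Fs - W" using UF by auto
    have "card ((Fs - (W \<union> U)) \<union> (U - W)) = card (Fs - (W \<union> U)) + card (U - W)"
      by (rule card_Un_disjoint) (use Fs finU in auto)
    then have "card (Fs - W) = card (Fs - (W \<union> U)) + card (U - W)" unfolding eq2 .
    then have "card (Fs - (W \<union> U)) \<le> card (Fs - W) - \<beta> * card I" using betaI by linarith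
    also have "\<dots> \<le> (1 - \<beta>) * card (Fs - W) + 3 * \<gamma> * card Fs"
    proof -
      have "\<beta> * (card (Fs - W) - 3 * \<gamma> * card Fs) \<le> \<beta> * card I" using badb beta by (intro mult_left_mono) auto
      moreover have "\<beta> * (3 * \<gamma> * card Fs) \<le> 3 * \<gamma> * card Fs" using beta gam by (intro mult_left_le_one_le) auto
      ultimately show ?thesis by (simp add: algebra_simps)
    qed
    finally show "card (Fs - (\<Union>p\<in>P'. rt (R (fst p)) (snd p))) \<le> (1 - \<beta>) * card (Fs - (\<Union>p\<in>P. rt (R (fst p)) (snd p))) + 3 * \<gamma> * card Fs"
      unfolding W' W_def by simp
  qed
qed

end

context ow begin

lemma tiling:
  fixes R :: "nat \<Rightarrow> 'g set" and n :: nat and \<beta> \<gamma> L0 :: real and Fs :: "'g set"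
  assumes beta: "0 < \<beta>" "\<beta> \<le> 1/2" and gam: "0 \<le> \<gamma>" and L0: "0 \<le> L0"
    and Rne: "\<And>i. i < n \<Longrightarrow> R i \<noteq> {}" and Rall: "\<And>i. finite (R i)"
    and Rphi: "\<And>i. i < n \<Longrightarrow> \<phi> (R i) \<le> L0 * card (R i)"
    and tile_inv: "\<And>j i. j < i \<Longrightarrow> i < n \<Longrightarrow> real (\<Sum>t\<in>R j. card ((\<lambda>a. - t + a) ` R i - R i)) \<le> \<gamma> * card (R i)"
    and Fs: "finite Fs" and F_inv: "\<And>j. j < n \<Longrightarrow> real (\<Sum>t\<in>R j. card ((\<lambda>a. t + a) ` Fs - Fs)) \<le> \<gamma> * card Fs"
  shows "\<phi> Fs \<le> L0 * card Fs / (1 - \<beta>) + ((1 - \<beta>) ^ n + 3 * real n * \<gamma>) * card Fs * \<phi> {0}"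
proof -
  have claim: "\<exists>P. finite P \<and> (\<forall>p\<in>P. n - s \<le> fst p \<and> fst p < n \<and> rt (R (fst p)) (snd p) \<subseteq> Fs) \<and>
      (1 - \<beta>) * (\<Sum>p\<in>P. card (R (fst p))) \<le> card (\<Union>p\<in>P. rt (R (fst p)) (snd p)) \<and>
      card (Fs - (\<Union>p\<in>P. rt (R (fst p)) (snd p))) \<le> ((1 - \<beta>) ^ s + 3 * real s * \<gamma>) * card Fs"
    if "s \<le> n" for s
    using that
  proof (induction s)
    case 0
    show ?case by (rule exI[of _ "{}"]) simp
  next
    case (Suc s)
    have sn: "s \<le> n" using Suc.prems by simp
    obtain P where P: "finite P" "\<forall>p\<in>P. n - s \<le> fst p \<and> fst p < n \<and> rt (R (fst p)) (snd p) \<subseteq> Fs"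
      "(1 - \<beta>) * (\<Sum>p\<in>P. card (R (fst p))) \<le> card (\<Union>p\<in>P. rt (R (fst p)) (snd p))"
      "card (Fs - (\<Union>p\<in>P. rt (R (fst p)) (snd p))) \<le> ((1 - \<beta>) ^ s + 3 * real s * \<gamma>) * card Fs"
      using Suc.IH[OF sn] by (elim exE conjE) simp
    define j where "j = n - Suc s"
    have jn: "j < n" using Suc.prems unfolding j_def by simp
    have Pj: "\<And>p. p \<in> P \<Longrightarrow> j < fst p \<and> fst p < n \<and> rt (R (fst p)) (snd p) \<subseteq> Fs"
      using P(2) Suc.prems unfolding j_def by fastforce
    have "\<exists>P'. finite P' \<and> (\<forall>p\<in>P'. j \<le> fst p \<and> fst p < n \<and> rt (R (fst p)) (snd p) \<subseteq> Fs) \<and>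
      (1 - \<beta>) * (\<Sum>p\<in>P'. card (R (fst p))) \<le> card (\<Union>p\<in>P'. rt (R (fst p)) (snd p)) \<and>
      card (Fs - (\<Union>p\<in>P'. rt (R (fst p)) (snd p))) \<le> (1 - \<beta>) * card (Fs - (\<Union>p\<in>P. rt (R (fst p)) (snd p))) + 3 * \<gamma> * card Fs"
    proof (rule tiling_step[OF beta gam Rall Rne[OF jn] Rall jn tile_inv[of j] Fs F_inv[OF jn] P(1) Pj P(3)])
      fix P' assume "finite P'" "\<And>p. p \<in> P' \<Longrightarrow> j \<le> fst p \<and> fst p < n \<and> rt (R (fst p)) (snd p) \<subseteq> Fs"
      "(1 - \<beta>) * (\<Sum>p\<in>P'. card (R (fst p))) \<le> card (\<Union>p\<in>P'. rt (R (fst p)) (snd p))"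
      "card (Fs - (\<Union>p\<in>P'. rt (R (fst p)) (snd p))) \<le> (1 - \<beta>) * card (Fs - (\<Union>p\<in>P. rt (R (fst p)) (snd p))) + 3 * \<gamma> * card Fs"
      then show ?thesis by blast
    qed
    then obtain P' where P': "finite P'" "\<forall>p\<in>P'. j \<le> fst p \<and> fst p < n \<and> rt (R (fst p)) (snd p) \<subseteq> Fs"
      "(1 - \<beta>) * (\<Sum>p\<in>P'. card (R (fst p))) \<le> card (\<Union>p\<in>P'. rt (R (fst p)) (snd p))"
      "card (Fs - (\<Union>p\<in>P'. rt (R (fst p)) (snd p))) \<le> (1 - \<beta>) * card (Fs - (\<Union>p\<in>P. rt (R (fst p)) (snd p))) + 3 * \<gamma> * card Fs"
      by (elim exE conjE) simp
    have "(1 - \<beta>) * card (Fs - (\<Union>p\<in>P. rt (R (fst p)) (snd p))) \<le> (1 - \<beta>) * (((1 - \<beta>) ^ s + 3 * real s * \<gamma>) * card Fs)"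
      by (rule mult_left_mono) (use P(4) beta in auto)
    also have "\<dots> + 3 * \<gamma> * card Fs \<le> ((1 - \<beta>) ^ Suc s + 3 * real (Suc s) * \<gamma>) * card Fs"
    proof -
      have "(1 - \<beta>) * (3 * real s * \<gamma> * card Fs) \<le> 1 * (3 * real s * \<gamma> * card Fs)"
        by (rule mult_right_mono) (use beta gam in auto)
      then show ?thesis by (simp add: algebra_simps)
    qed
    finally have A: "card (Fs - (\<Union>p\<in>P'. rt (R (fst p)) (snd p))) \<le> ((1 - \<beta>) ^ Suc s + 3 * real (Suc s) * \<gamma>) * card Fs"
      using P'(4) by linarith
    have B: "\<forall>p\<in>P'. n - Suc s \<le> fst p \<and> fst p < n \<and> rt (R (fst p)) (snd p) \<subseteq> Fs"
      using P'(2) unfolding j_def by blast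
    show ?case using P'(1) B P'(3) A by (intro exI[of _ P'] conjI)
  qed
  obtain P where P: "finite P" "\<forall>p\<in>P. fst p < n \<and> rt (R (fst p)) (snd p) \<subseteq> Fs"
      "(1 - \<beta>) * (\<Sum>p\<in>P. card (R (fst p))) \<le> card (\<Union>p\<in>P. rt (R (fst p)) (snd p))"
      "card (Fs - (\<Union>p\<in>P. rt (R (fst p)) (snd p))) \<le> ((1 - \<beta>) ^ n + 3 * real n * \<gamma>) * card Fs"
    using claim[of n] by auto
  define W where "W = (\<Union>p\<in>P. rt (R (fst p)) (snd p))"
  have WF: "W \<subseteq> Fs" using P(2) unfolding W_def by auto
  have finW: "finite W" using WF Fs finite_subset by blast
  have "\<phi> Fs = \<phi> (W \<union> (Fs - W))" using WF by (simp add: Un_Diff_cancel Un_absorb1)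
  also have "\<dots> \<le> \<phi> W + \<phi> (Fs - W)" by (rule sub) (use finW Fs in auto)
  also have "\<phi> W \<le> (\<Sum>p\<in>P. \<phi> (rt (R (fst p)) (snd p)))" unfolding W_def
    by (rule sub_UN) (use P(1) Rall in auto)
  also have "\<dots> = (\<Sum>p\<in>P. \<phi> (R (fst p)))" by (rule sum.cong) (auto simp: inv Rall)
  also have "\<dots> \<le> (\<Sum>p\<in>P. L0 * card (R (fst p)))" by (rule sum_mono) (use Rphi P(2) in auto)
  also have "\<dots> = L0 * (\<Sum>p\<in>P. card (R (fst p)))" by (simp add: sum_distrib_left)
  also have "\<dots> \<le> L0 * card Fs / (1 - \<beta>)"
  proof -
    have "(\<Sum>p\<in>P. card (R (fst p))) \<le> card W / (1 - \<beta>)"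
      using P(3) beta unfolding W_def by (simp add: field_simps)
    also have "\<dots> \<le> card Fs / (1 - \<beta>)"
      using card_mono[OF Fs WF] beta by (intro divide_right_mono) auto
    finally have "L0 * (\<Sum>p\<in>P. card (R (fst p))) \<le> L0 * (card Fs / (1 - \<beta>))"
      using L0 by (rule mult_left_mono)
    then show ?thesis by simp
  qed
  also have "\<phi> (Fs - W) \<le> card (Fs - W) * \<phi> {0}" by (rule le_card) (use Fs in auto)
  also have "\<dots> \<le> ((1 - \<beta>) ^ n + 3 * real n * \<gamma>) * card Fs * \<phi> {0}"
    by (rule mult_right_mono) (use P(4) nonneg[of "{0}"] in \<open>auto simp: W_def\<close>)
  finally show ?thesis by simp
qed

end

lemma folner_basic: "folner F \<Longrightarrow> finite (F n) \<and> F n \<noteq> {}"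
  unfolding folner_def by auto

lemma folner_ratio:
  assumes "folner F"
  shows "(\<lambda>n. real (card ((\<lambda>a. g + a) ` F n - F n)) / real (card (F n))) \<longlonglongrightarrow> 0"
proof (rule tendsto_sandwich[of "\<lambda>_. 0" _ _ "\<lambda>n. real (card ((((+) g) ` F n - F n) \<union> (F n - (+) g ` F n))) / real (card (F n))"])
  show "\<forall>\<^sub>F n in sequentially. 0 \<le> real (card ((\<lambda>a. g + a) ` F n - F n)) / real (card (F n))" by simp
  show "\<forall>\<^sub>F n in sequentially. real (card ((\<lambda>a. g + a) ` F n - F n)) / real (card (F n))
      \<le> real (card ((((+) g) ` F n - F n) \<union> (F n - (+) g ` F n))) / real (card (F n))"
  proof (rule always_eventually, rule allI)
    fix n
    have "finite (F n)" using folner_basic[OF assms] by auto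
    then have "card ((\<lambda>a. g + a) ` F n - F n) \<le> card ((((+) g) ` F n - F n) \<union> (F n - (+) g ` F n))"
      by (intro card_mono) auto
    then show "real (card ((\<lambda>a. g + a) ` F n - F n)) / real (card (F n))
      \<le> real (card ((((+) g) ` F n - F n) \<union> (F n - (+) g ` F n))) / real (card (F n))"
      by (intro divide_right_mono) auto
  qed
  show "(\<lambda>n. real (card ((((+) g) ` F n - F n) \<union> (F n - (+) g ` F n))) / real (card (F n))) \<longlonglongrightarrow> 0"
    using assms unfolding folner_def by blast
qed simp

lemma folner_ratio_sum:
  assumes "folner F" "finite K"
  shows "(\<lambda>n. real (\<Sum>t\<in>K. card ((\<lambda>a. s t + a) ` F n - F n)) / real (card (F n))) \<longlonglongrightarrow> 0"
proof -
  have "(\<lambda>n. \<Sum>t\<in>K. real (card ((\<lambda>a. s t + a) ` F n - F n)) / real (card (F n))) \<longlonglongrightarrow> (\<Sum>t\<in>K. 0)"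
    by (intro tendsto_sum folner_ratio assms)
  then show ?thesis by (simp add: sum_divide_distrib)
qed

lemma folner_event:
  fixes \<gamma> :: real
  assumes "folner F" "finite K" "\<gamma> > 0"
  shows "eventually (\<lambda>n. real (\<Sum>t\<in>K. card ((\<lambda>a. s t + a) ` F n - F n)) \<le> \<gamma> * card (F n)) sequentially"
proof -
  have "eventually (\<lambda>n. real (\<Sum>t\<in>K. card ((\<lambda>a. s t + a) ` F n - F n)) / real (card (F n)) < \<gamma>) sequentially"
    using order_tendstoD(2)[OF folner_ratio_sum[OF assms(1,2), of s] assms(3)] .
  then show ?thesis
  proof (rule eventually_mono)
    fix n assume "real (\<Sum>t\<in>K. card ((\<lambda>a. s t + a) ` F n - F n)) / real (card (F n)) < \<gamma>"
    moreover have "0 < real (card (F n))" using folner_basic[OF assms(1)] by (simp add: card_gt_0_iff)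
    ultimately show "real (\<Sum>t\<in>K. card ((\<lambda>a. s t + a) ` F n - F n)) \<le> \<gamma> * card (F n)"
      by (simp add: divide_less_eq)
  qed
qed

context ow begin

lemma key:
  fixes F :: "nat \<Rightarrow> 'g set" and L0 \<epsilon> :: real
  assumes fol: "folner F" and eps: "\<epsilon> > 0"
    and freq: "\<exists>\<^sub>F n in sequentially. \<phi> (F n) / card (F n) < L0"
  shows "eventually (\<lambda>n. \<phi> (F n) / card (F n) < L0 + \<epsilon>) sequentially"
proof -
  define C0 where "C0 = \<phi> {0}"
  have C0: "0 \<le> C0" unfolding C0_def by (rule nonneg) simp
  have fin: "\<And>n. finite (F n)" and ne: "\<And>n. F n \<noteq> {}" using folner_basic[OF fol] by auto
  have cpos: "\<And>n. 0 < real (card (F n))" using fin ne by (simp add: card_gt_0_iff)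
  obtain n0 where "\<phi> (F n0) / card (F n0) < L0" using frequently_ex[OF freq] by blast
  moreover have "0 \<le> \<phi> (F n0) / card (F n0)" using nonneg[OF fin] by simp
  ultimately have L0: "0 < L0" by linarith
  define \<eta> where "\<eta> = min (1/2) (\<epsilon> / (4 * (L0 + C0 + 1)))"
  have eta1: "0 < \<eta>" using eps L0 C0 unfolding \<eta>_def by auto
  have eta2: "\<eta> \<le> 1/2" unfolding \<eta>_def by (rule min.cobounded1)
  note eta = eta1 eta2
  obtain N where N: "(1 - \<eta>) ^ N < \<eta>" using real_arch_pow_inv[of \<eta> "1 - \<eta>"] eta by auto
  have N1: "N \<noteq> 0" using N eta by (cases N) auto
  define \<gamma> where "\<gamma> = \<eta> / (3 * N)"
  have gam: "0 < \<gamma>" using eta N1 unfolding \<gamma>_def by simp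
  have build: "\<exists>mm :: nat \<Rightarrow> nat. (\<forall>i<k. \<phi> (F (mm i)) / card (F (mm i)) < L0) \<and>
     (\<forall>j i. j < i \<longrightarrow> i < k \<longrightarrow> real (\<Sum>t\<in>F (mm j). card ((\<lambda>a. - t + a) ` F (mm i) - F (mm i))) \<le> \<gamma> * card (F (mm i)))" for k :: nat
  proof (induction k)
    case 0 show ?case by auto
  next
    case (Suc k)
    then obtain mm where mm: "\<forall>i<k. \<phi> (F (mm i)) / card (F (mm i)) < L0"
     "\<forall>j i. j < i \<longrightarrow> i < k \<longrightarrow> real (\<Sum>t\<in>F (mm j). card ((\<lambda>a. - t + a) ` F (mm i) - F (mm i))) \<le> \<gamma> * card (F (mm i))"
      by blast
    have ev: "eventually (\<lambda>M. \<forall>j\<in>{..<k}. real (\<Sum>t\<in>F (mm j). card ((\<lambda>a. - t + a) ` F M - F M)) \<le> \<gamma> * card (F M)) sequentially"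
      by (rule eventually_ball_finite) (use folner_event[OF fol fin gam, where s=uminus] in auto)
    obtain M where M: "\<forall>j\<in>{..<k}. real (\<Sum>t\<in>F (mm j). card ((\<lambda>a. - t + a) ` F M - F M)) \<le> \<gamma> * card (F M)"
      "\<phi> (F M) / card (F M) < L0"
      using frequently_ex[OF frequently_eventually_conj[OF freq ev]] by blast
    define mm' where "mm' = mm(k := M)"
    show ?case
    proof (rule exI[of _ mm'], intro conjI allI impI)
      fix i assume "i < Suc k"
      then show "\<phi> (F (mm' i)) / card (F (mm' i)) < L0" using mm(1) M(2) unfolding mm'_def
        by (cases "i = k") auto
    next
      fix j i assume ji: "j < i" "i < Suc k"
      show "real (\<Sum>t\<in>F (mm' j). card ((\<lambda>a. - t + a) ` F (mm' i) - F (mm' i))) \<le> \<gamma> * card (F (mm' i))"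
      proof (cases "i = k")
        case True
        then show ?thesis using M(1) ji unfolding mm'_def by auto
      next
        case False
        then show ?thesis using mm(2) ji unfolding mm'_def by auto
      qed
    qed
  qed
  obtain mm where mm: "\<forall>i<N. \<phi> (F (mm i)) / card (F (mm i)) < L0"
     "\<forall>j i. j < i \<longrightarrow> i < N \<longrightarrow> real (\<Sum>t\<in>F (mm j). card ((\<lambda>a. - t + a) ` F (mm i) - F (mm i))) \<le> \<gamma> * card (F (mm i))"
    using build[of N] by blast
  define R where "R i = F (mm i)" for i
  have evF: "eventually (\<lambda>m. \<forall>j\<in>{..<N}. real (\<Sum>t\<in>R j. card ((\<lambda>a. t + a) ` F m - F m)) \<le> \<gamma> * card (F m)) sequentially"
    by (rule eventually_ball_finite) (use folner_event[OF fol fin gam, where s="\<lambda>t. t"] fin in \<open>auto simp: R_def\<close>)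
  have bound: "L0 / (1 - \<eta>) + ((1 - \<eta>) ^ N + 3 * real N * \<gamma>) * C0 < L0 + \<epsilon>"
  proof -
    have a1: "3 * real N * \<gamma> = \<eta>" unfolding \<gamma>_def using N1 by simp
    have a2: "((1 - \<eta>) ^ N + \<eta>) * C0 \<le> (2 * \<eta>) * C0" using N C0 by (intro mult_right_mono) auto
    have a3: "L0 / (1 - \<eta>) \<le> L0 + 2 * \<eta> * L0"
    proof -
      have "L0 \<le> (L0 + 2 * \<eta> * L0) * (1 - \<eta>)"
      proof -
        have "(L0 + 2 * \<eta> * L0) * (1 - \<eta>) = L0 + \<eta> * L0 * (1 - 2 * \<eta>)" by (simp add: algebra_simps)
        moreover have "0 \<le> \<eta> * L0 * (1 - 2 * \<eta>)" using eta L0 by simp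
        ultimately show ?thesis by linarith
      qed
      then show ?thesis using eta by (simp add: divide_le_eq)
    qed
    have a4: "2 * \<eta> * (L0 + C0) < \<epsilon>"
    proof -
      have "\<eta> \<le> \<epsilon> / (4 * (L0 + C0 + 1))" unfolding \<eta>_def by simp
      then have "\<eta> * (4 * (L0 + C0 + 1)) \<le> \<epsilon>" using L0 C0 by (simp add: le_divide_eq)
      moreover have "2 * \<eta> * (L0 + C0) < \<eta> * (4 * (L0 + C0 + 1))"
      proof -
        have "0 < \<eta> * (2 * (L0 + C0) + 4)" using eta L0 C0 by (intro mult_pos_pos) auto
        moreover have "\<eta> * (4 * (L0 + C0 + 1)) - 2 * \<eta> * (L0 + C0) = \<eta> * (2 * (L0 + C0) + 4)"
          by (simp add: algebra_simps)
        ultimately show ?thesis by linarith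
      qed
      ultimately show ?thesis by linarith
    qed
    show ?thesis using a1 a2 a3 a4 by (simp add: algebra_simps)
  qed
  show ?thesis
    using evF
  proof (rule eventually_mono)
    fix m assume Fm: "\<forall>j\<in>{..<N}. real (\<Sum>t\<in>R j. card ((\<lambda>a. t + a) ` F m - F m)) \<le> \<gamma> * card (F m)"
    have "\<phi> (F m) \<le> L0 * card (F m) / (1 - \<eta>) + ((1 - \<eta>) ^ N + 3 * real N * \<gamma>) * card (F m) * \<phi> {0}"
    proof (rule tiling[of \<eta> \<gamma> L0 N R])
      show "\<And>i. i < N \<Longrightarrow> R i \<noteq> {}" using ne unfolding R_def by auto
      show "\<And>i. finite (R i)" using fin unfolding R_def by auto
      show "\<And>i. i < N \<Longrightarrow> \<phi> (R i) \<le> L0 * card (R i)"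
        using mm(1) cpos unfolding R_def by (simp add: divide_less_eq less_imp_le)
      show "\<And>j i. j < i \<Longrightarrow> i < N \<Longrightarrow> real (\<Sum>t\<in>R j. card ((\<lambda>a. - t + a) ` R i - R i)) \<le> \<gamma> * card (R i)"
        using mm(2) unfolding R_def by auto
      show "\<And>j. j < N \<Longrightarrow> real (\<Sum>t\<in>R j. card ((\<lambda>a. t + a) ` F m - F m)) \<le> \<gamma> * card (F m)"
        using Fm by auto
    qed (use eta gam L0 fin in auto)
    then have "\<phi> (F m) / card (F m) \<le> L0 / (1 - \<eta>) + ((1 - \<eta>) ^ N + 3 * real N * \<gamma>) * C0"
      using cpos[of m] unfolding C0_def by (simp add: divide_le_eq algebra_simps)
    then show "\<phi> (F m) / card (F m) < L0 + \<epsilon>" using bound by linarith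
  qed
qed

end

context ow begin

lemma ow_conv:
  fixes F :: "nat \<Rightarrow> 'g set"
  assumes fol: "folner F"
  shows "\<exists>l. (\<lambda>n. \<phi> (F n) / card (F n)) \<longlonglongrightarrow> l"
proof -
  define a where "a n = \<phi> (F n) / card (F n)" for n
  define C0 where "C0 = \<phi> {0}"
  have fin: "\<And>n. finite (F n)" and ne: "\<And>n. F n \<noteq> {}" using folner_basic[OF fol] by auto
  have cpos: "\<And>n. 0 < real (card (F n))" using fin ne by (simp add: card_gt_0_iff)
  have a0: "0 \<le> a n" for n unfolding a_def using nonneg[OF fin] by simp
  have aC: "a n \<le> C0" for n
  proof -
    have "\<phi> (F n) \<le> card (F n) * C0" unfolding C0_def by (rule le_card[OF fin])
    then show ?thesis unfolding a_def using cpos[of n] by (simp add: divide_le_eq mult.commute)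
  qed
  define f where "f n = ereal (a n)" for n
  define la where "la = liminf f"
  have la0: "0 \<le> la" unfolding la_def f_def by (rule Liminf_bounded) (use a0 in auto)
  have laC: "la \<le> ereal C0"
  proof -
    have "la \<le> limsup f" unfolding la_def by (rule Liminf_le_Limsup) simp
    also have "\<dots> \<le> ereal C0" unfolding f_def by (rule Limsup_bounded) (use aC in auto)
    finally show ?thesis .
  qed
  have sup: "limsup f \<le> la"
    unfolding Limsup_le_iff
  proof (intro allI impI)
    fix y assume y: "la < y"
    obtain z1 where z1: "la < ereal z1" "ereal z1 < y" using ereal_dense2[OF y] by blast
    obtain z2 where z2: "ereal z1 < ereal z2" "ereal z2 < y" using ereal_dense2[OF z1(2)] by blast
    have freq: "\<exists>\<^sub>F n in sequentially. \<phi> (F n) / card (F n) < z1"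
    proof (rule ccontr)
      assume "\<not> ?thesis"
      then have "eventually (\<lambda>n. z1 \<le> a n) sequentially"
        unfolding not_frequently a_def by (simp add: not_less)
      then have "ereal z1 \<le> la" unfolding la_def f_def by (intro Liminf_bounded) auto
      then show False using z1 by simp
    qed
    have "eventually (\<lambda>n. \<phi> (F n) / card (F n) < z1 + (z2 - z1)) sequentially"
      by (rule key[OF fol _ freq]) (use z2 in simp)
    then show "eventually (\<lambda>n. f n < y) sequentially"
    proof (rule eventually_mono)
      fix n assume "\<phi> (F n) / card (F n) < z1 + (z2 - z1)"
      then have "f n < ereal z2" unfolding f_def a_def by simp
      then show "f n < y" using z2(2) by (rule less_trans)
    qed
  qed
  have "liminf f = la" "limsup f = la"
    using sup Liminf_le_Limsup[of sequentially f] unfolding la_def by auto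
  then have "f \<longlonglongrightarrow> la" by (intro Liminf_eq_Limsup) auto
  moreover have "la = ereal (real_of_ereal la)" using la0 laC by (cases la) auto
  ultimately have "(\<lambda>n. ereal (a n)) \<longlonglongrightarrow> ereal (real_of_ereal la)" unfolding f_def by simp
  then have "a \<longlonglongrightarrow> real_of_ereal la" by simp
  then show ?thesis unfolding a_def by blast
qed

end

lemma join_cover_PiE: "join_cover act A U = (\<lambda>c. \<Inter>g\<in>A. act g -` c g) ` (PiE A (\<lambda>_. U))"
proof
  show "join_cover act A U \<subseteq> (\<lambda>c. \<Inter>g\<in>A. act g -` c g) ` (PiE A (\<lambda>_. U))"
  proof
    fix S assume "S \<in> join_cover act A U"
    then obtain c where c: "c \<in> A \<rightarrow> U" "S = (\<Inter>g\<in>A. act g -` c g)" unfolding join_cover_def by auto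
    have "restrict c A \<in> PiE A (\<lambda>_. U)" using c(1) by auto
    moreover have "S = (\<Inter>g\<in>A. act g -` (restrict c A) g)" using c(2) by auto
    ultimately show "S \<in> (\<lambda>c. \<Inter>g\<in>A. act g -` c g) ` (PiE A (\<lambda>_. U))" by blast
  qed
  show "(\<lambda>c. \<Inter>g\<in>A. act g -` c g) ` (PiE A (\<lambda>_. U)) \<subseteq> join_cover act A U"
  proof
    fix S assume "S \<in> (\<lambda>c. \<Inter>g\<in>A. act g -` c g) ` (PiE A (\<lambda>_. U))"
    then obtain c where c: "c \<in> PiE A (\<lambda>_. U)" "S = (\<Inter>g\<in>A. act g -` c g)" by blast
    have "c \<in> A \<rightarrow> U" using c(1) by (simp add: PiE_iff)
    then show "S \<in> join_cover act A U" unfolding join_cover_def using c(2) by blast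
  qed
qed

lemma join_mem: "c \<in> A \<rightarrow> U \<Longrightarrow> (\<Inter>g\<in>A. act g -` c g) \<in> join_cover act A U"
  unfolding join_cover_def by (rule CollectI, rule exI[of _ c]) simp

lemma join_finite: "finite A \<Longrightarrow> finite U \<Longrightarrow> finite (join_cover act A U)"
  unfolding join_cover_PiE by (intro finite_imageI finite_PiE) auto

lemma join_covers:
  assumes "\<Union>U = UNIV"
  shows "\<Union>(join_cover act A U) = UNIV"
proof -
  have "x \<in> \<Union>(join_cover act A U)" for x
  proof -
    define c where "c g = (SOME V. V \<in> U \<and> act g x \<in> V)" for g
    have c: "c g \<in> U \<and> act g x \<in> c g" for g
    proof -
      have "act g x \<in> \<Union>U" using assms by simp
      then have "\<exists>V. V \<in> U \<and> act g x \<in> V" by (simp only: Union_iff Bex_def)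
      then show ?thesis unfolding c_def by (rule someI_ex)
    qed
    have "(\<Inter>g\<in>A. act g -` c g) \<in> join_cover act A U" unfolding join_cover_def using c by auto
    moreover have "x \<in> (\<Inter>g\<in>A. act g -` c g)" using c by auto
    ultimately show ?thesis by blast
  qed
  then show ?thesis by blast
qed

lemma cover_num_attained:
  assumes "finite V" "Z \<subseteq> \<Union>V"
  obtains W where "W \<subseteq> V" "Z \<subseteq> \<Union>W" "card W = cover_num V Z"
proof -
  have "{card W | W. W \<subseteq> V \<and> Z \<subseteq> \<Union>W} \<noteq> {}" using assms by blast
  then have "cover_num V Z \<in> {card W | W. W \<subseteq> V \<and> Z \<subseteq> \<Union>W}"
    unfolding cover_num_def by (rule Inf_nat_def1)
  then obtain W where W: "cover_num V Z = card W \<and> W \<subseteq> V \<and> Z \<subseteq> \<Union>W"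
    unfolding mem_Collect_eq by (rule exE)
  have W1: "W \<subseteq> V" using W by (elim conjE)
  have W2: "Z \<subseteq> \<Union>W" using W by (elim conjE)
  have W3: "card W = cover_num V Z" using W by (elim conjE) (rule sym)
  show ?thesis by (rule that[OF W1 W2 W3])
qed

lemma cover_num_le: "W \<subseteq> V \<Longrightarrow> Z \<subseteq> \<Union>W \<Longrightarrow> cover_num V Z \<le> card W"
  unfolding cover_num_def by (rule cInf_lower) auto

lemma cover_num_pos:
  assumes "finite V" "Z \<subseteq> \<Union>V" "Z \<noteq> {}"
  shows "1 \<le> cover_num V Z"
proof -
  obtain W where W: "W \<subseteq> V" "Z \<subseteq> \<Union>W" "card W = cover_num V Z" using cover_num_attained[OF assms(1,2)] .
  have "W \<noteq> {}" using W(2) assms(3) by auto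
  moreover have "finite W" using W(1) assms(1) finite_subset by blast
  ultimately have "0 < card W" by (simp add: card_gt_0_iff)
  then show ?thesis using W(3) by simp
qed

locale gsys =
  fixes act :: "'g::group_add \<Rightarrow> 'x \<Rightarrow> 'x" and Z :: "'x set"
  assumes act0: "\<And>x. act 0 x = x" and actadd: "\<And>g h x. act (g + h) x = act g (act h x)"
    and Zne: "Z \<noteq> {}" and Zinv: "\<And>g. act g ` Z = Z"
begin

context
  fixes U :: "'x set set"
  assumes Ufin: "finite U" and Ucov: "\<Union>U = UNIV"
begin

lemma JZ: "Z \<subseteq> \<Union>(join_cover act A U)" using join_covers[OF Ucov, where act=act and A=A] by auto

lemma N_pos: "finite A \<Longrightarrow> 1 \<le> cover_num (join_cover act A U) Z"
  by (rule cover_num_pos) (use join_finite[OF _ Ufin] JZ Zne in auto)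

lemma N_sub:
  assumes A: "finite A" and B: "finite B"
  shows "cover_num (join_cover act (A \<union> B) U) Z \<le> cover_num (join_cover act A U) Z * cover_num (join_cover act B U) Z"
proof -
  obtain WA where WA: "WA \<subseteq> join_cover act A U" "Z \<subseteq> \<Union>WA" "card WA = cover_num (join_cover act A U) Z"
    using cover_num_attained[OF join_finite[OF A Ufin] JZ] .
  obtain WB where WB: "WB \<subseteq> join_cover act B U" "Z \<subseteq> \<Union>WB" "card WB = cover_num (join_cover act B U) Z"
    using cover_num_attained[OF join_finite[OF B Ufin] JZ] .
  have finA: "finite WA" using WA(1) join_finite[OF A Ufin] finite_subset by blast
  have finB: "finite WB" using WB(1) join_finite[OF B Ufin] finite_subset by blast
  define ca where "ca a = (SOME c. c \<in> A \<rightarrow> U \<and> a = (\<Inter>g\<in>A. act g -` c g))" for a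
  define cb where "cb b = (SOME c. c \<in> B \<rightarrow> U \<and> b = (\<Inter>g\<in>B. act g -` c g))" for b
  have ca: "ca a \<in> A \<rightarrow> U \<and> a = (\<Inter>g\<in>A. act g -` ca a g)" if "a \<in> WA" for a
  proof -
    have "\<exists>c. c \<in> A \<rightarrow> U \<and> a = (\<Inter>g\<in>A. act g -` c g)" using that WA(1) unfolding join_cover_def by blast
    then show ?thesis unfolding ca_def by (rule someI_ex)
  qed
  have cb: "cb b \<in> B \<rightarrow> U \<and> b = (\<Inter>g\<in>B. act g -` cb b g)" if "b \<in> WB" for b
  proof -
    have "\<exists>c. c \<in> B \<rightarrow> U \<and> b = (\<Inter>g\<in>B. act g -` c g)" using that WB(1) unfolding join_cover_def by blast
    then show ?thesis unfolding cb_def by (rule someI_ex)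
  qed
  define E where "E p = (\<Inter>g\<in>A \<union> B. act g -` (if g \<in> A then ca (fst p) g else cb (snd p) g))" for p
  define W where "W = E ` (WA \<times> WB)"
  have "W \<subseteq> join_cover act (A \<union> B) U"
  proof
    fix S assume "S \<in> W"
    then obtain a b where ab: "a \<in> WA" "b \<in> WB" "S = E (a, b)" unfolding W_def by auto
    have "(\<lambda>g. if g \<in> A then ca a g else cb b g) \<in> (A \<union> B) \<rightarrow> U" using ca[OF ab(1)] cb[OF ab(2)] by auto
    moreover have "S = (\<Inter>g\<in>A \<union> B. act g -` (\<lambda>g. if g \<in> A then ca a g else cb b g) g)"
      unfolding ab(3) E_def by (simp only: fst_conv snd_conv)
    ultimately show "S \<in> join_cover act (A \<union> B) U" by (simp only: join_mem)
  qed
  moreover have "Z \<subseteq> \<Union>W"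
  proof
    fix z assume "z \<in> Z"
    then obtain a b where ab: "a \<in> WA" "z \<in> a" "b \<in> WB" "z \<in> b" using WA(2) WB(2) by blast
    have a_eq: "a = (\<Inter>g\<in>A. act g -` ca a g)" using ca[OF ab(1)] by (rule conjunct2)
    have b_eq: "b = (\<Inter>g\<in>B. act g -` cb b g)" using cb[OF ab(3)] by (rule conjunct2)
    have za: "z \<in> (\<Inter>g\<in>A. act g -` ca a g)" by (subst a_eq[symmetric]) (rule ab(2))
    have zb: "z \<in> (\<Inter>g\<in>B. act g -` cb b g)" by (subst b_eq[symmetric]) (rule ab(4))
    have "z \<in> E (a, b)" unfolding E_def
    proof (rule INT_I)
      fix g assume "g \<in> A \<union> B"
      then show "z \<in> act g -` (if g \<in> A then ca (fst (a, b)) g else cb (snd (a, b)) g)"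
        using za zb by (cases "g \<in> A") auto
    qed
    moreover have "E (a, b) \<in> W" unfolding W_def using ab(1,3) by (intro imageI) simp
    ultimately show "z \<in> \<Union>W" by (rule UnionI[rotated])
  qed
  ultimately have "cover_num (join_cover act (A \<union> B) U) Z \<le> card W" by (rule cover_num_le)
  also have "\<dots> \<le> card (WA \<times> WB)" unfolding W_def by (rule card_image_le) (rule finite_cartesian_product[OF finA finB])
  also have "\<dots> = card WA * card WB" by (rule card_cartesian_product)
  finally show ?thesis unfolding WA(3)[symmetric] WB(3)[symmetric] .
qed

lemma N_rt_le:
  assumes A: "finite A"
  shows "cover_num (join_cover act (rt A c) U) Z \<le> cover_num (join_cover act A U) Z"
proof -
  obtain W where W: "W \<subseteq> join_cover act A U" "Z \<subseteq> \<Union>W" "card W = cover_num (join_cover act A U) Z"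
    using cover_num_attained[OF join_finite[OF A Ufin] JZ] .
  have finW: "finite W" using W(1) join_finite[OF A Ufin] finite_subset by blast
  define W' where "W' = (\<lambda>S. act c -` S) ` W"
  have "W' \<subseteq> join_cover act (rt A c) U"
  proof
    fix S' assume "S' \<in> W'"
    then obtain S where S: "S \<in> W" "S' = act c -` S" unfolding W'_def by auto
    then obtain e where e: "e \<in> A \<rightarrow> U" "S = (\<Inter>g\<in>A. act g -` e g)" using W(1) unfolding join_cover_def by auto
    define e' where "e' h = e (h + - c)" for h
    have "e' \<in> rt A c \<rightarrow> U"
    proof
      fix h assume "h \<in> rt A c"
      then have "h + - c \<in> A" by (simp only: rt_mem)
      then show "e' h \<in> U" using e(1) unfolding e'_def by blast
    qed
    moreover have "S' = (\<Inter>h\<in>rt A c. act h -` e' h)"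
    proof -
      have vv: "act c -` (act g -` e g) = act (g + c) -` e g" for g by (auto simp: actadd)
      have "S' = (\<Inter>g\<in>A. act (g + c) -` e g)" unfolding S(2) e(2) vimage_INT vv ..
      also have "\<dots> = (\<Inter>h\<in>rt A c. act h -` e' h)" unfolding rt_def e'_def by (simp add: add.assoc)
      finally show ?thesis .
    qed
    ultimately show "S' \<in> join_cover act (rt A c) U" by (simp only: join_mem)
  qed
  moreover have "Z \<subseteq> \<Union>W'"
  proof
    fix z assume z: "z \<in> Z"
    then have "act c z \<in> act c ` Z" by (rule imageI)
    then have "act c z \<in> Z" unfolding Zinv[of c] .
    then obtain S where S: "S \<in> W" "act c z \<in> S" using W(2) by blast
    have "act c -` S \<in> W'" unfolding W'_def using S(1) by (rule imageI)
    moreover have "z \<in> act c -` S" using S(2) by simp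
    ultimately show "z \<in> \<Union>W'" by (rule UnionI)
  qed
  ultimately have "cover_num (join_cover act (rt A c) U) Z \<le> card W'" by (rule cover_num_le)
  also have "\<dots> \<le> card W" unfolding W'_def by (rule card_image_le[OF finW])
  finally show ?thesis using W(3) by linarith
qed

end
end

context gsys begin
context
  fixes U :: "'x set set"
  assumes Ufin: "finite U" and Ucov: "\<Union>U = UNIV"
begin
lemma JZ': "Z \<subseteq> \<Union>(join_cover act A U)" by (rule JZ[OF Ufin Ucov])
lemmas N_rt_le' = N_rt_le[OF Ufin Ucov] and N_pos' = N_pos[OF Ufin Ucov] and N_sub' = N_sub[OF Ufin Ucov]
lemma N_rt:
  assumes A: "finite A"
  shows "cover_num (join_cover act (rt A c) U) Z = cover_num (join_cover act A U) Z"
proof -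
  have e: "rt (rt A c) (- c) = A" unfolding rt_def image_image by (simp add: add.assoc)
  have "cover_num (join_cover act (rt (rt A c) (- c)) U) Z \<le> cover_num (join_cover act (rt A c) U) Z"
    by (rule N_rt_le') (simp add: A)
  then have "cover_num (join_cover act A U) Z \<le> cover_num (join_cover act (rt A c) U) Z"
    unfolding e .
  then show ?thesis using N_rt_le'[OF A, of c] by simp
qed

lemma N_empty: "cover_num (join_cover act {} U) Z = 1"
proof -
  have J: "join_cover act {} U = {UNIV}"
  proof -
    have "(\<lambda>g. SOME V. V \<in> U) \<in> {} \<rightarrow> U" by simp
    then show ?thesis unfolding join_cover_def by auto
  qed
  have "cover_num {UNIV} Z \<le> card {UNIV :: 'x set}" by (rule cover_num_le) auto
  moreover have "1 \<le> cover_num {UNIV} Z" by (rule cover_num_pos) (use Zne in auto)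
  ultimately show ?thesis unfolding J by simp
qed

lemma ow_N: "ow (\<lambda>A. ln (real (cover_num (join_cover act A U) Z)))"
proof (rule ow.intro)
  fix A B :: "'g set" assume A: "finite A" and B: "finite B"
  have p1: "0 < real (cover_num (join_cover act A U) Z)" using N_pos'[OF A] by simp
  have p2: "0 < real (cover_num (join_cover act B U) Z)" using N_pos'[OF B] by simp
  have p3: "0 < real (cover_num (join_cover act (A \<union> B) U) Z)" using N_pos'[of "A \<union> B"] A B by simp
  have "real (cover_num (join_cover act (A \<union> B) U) Z) \<le> real (cover_num (join_cover act A U) Z) * real (cover_num (join_cover act B U) Z)"
    using N_sub'[OF A B] by (metis of_nat_le_iff of_nat_mult)
  then have "ln (real (cover_num (join_cover act (A \<union> B) U) Z)) \<le> ln (real (cover_num (join_cover act A U) Z) * real (cover_num (join_cover act B U) Z))"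
    using p1 p2 p3 by (subst ln_le_cancel_iff) auto
  also have "\<dots> = ln (real (cover_num (join_cover act A U) Z)) + ln (real (cover_num (join_cover act B U) Z))"
    using p1 p2 by (rule ln_mult_pos)
  finally show "ln (real (cover_num (join_cover act (A \<union> B) U) Z)) \<le> ln (real (cover_num (join_cover act A U) Z)) + ln (real (cover_num (join_cover act B U) Z))" .
next
  fix A :: "'g set" and c assume "finite A"
  then show "ln (real (cover_num (join_cover act (rt A c) U) Z)) = ln (real (cover_num (join_cover act A U) Z))"
    by (simp add: N_rt)
next
  show "ln (real (cover_num (join_cover act {} U) Z)) = 0" by (simp add: N_empty)
next
  fix A :: "'g set" assume "finite A"
  then show "0 \<le> ln (real (cover_num (join_cover act A U) Z))" using N_pos' by simp
qed

lemma h_top_lim: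
  assumes "folner F"
  shows "(\<lambda>n. ln (real (cover_num (join_cover act (F n) U) Z)) / real (card (F n))) \<longlonglongrightarrow> h_top act F Z U"
proof -
  obtain l where l: "(\<lambda>n. ln (real (cover_num (join_cover act (F n) U) Z)) / real (card (F n))) \<longlonglongrightarrow> l"
    using ow.ow_conv[OF ow_N assms] by blast
  then have "h_top act F Z U = l" unfolding h_top_def by (rule limI)
  then show ?thesis using l by simp
qed

end
end

lemma bowen_ge: "finite A \<Longrightarrow> g \<in> A \<Longrightarrow> dist (act g x) (act g y) \<le> bowen_dist act A x y"
  unfolding bowen_dist_def by (rule Max_ge) auto

lemma bowen_le: "finite A \<Longrightarrow> A \<noteq> {} \<Longrightarrow> (\<And>g. g \<in> A \<Longrightarrow> dist (act g x) (act g y) \<le> r) \<Longrightarrow> bowen_dist act A x y \<le> r"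
  unfolding bowen_dist_def by (subst Max_le_iff) auto

lemma bowen_sym: "bowen_dist act A x y = bowen_dist act A y x"
  unfolding bowen_dist_def by (simp add: dist_commute)

lemma bowen_self: "finite A \<Longrightarrow> A \<noteq> {} \<Longrightarrow> bowen_dist act A x x = 0"
proof -
  assume "finite A" "A \<noteq> {}"
  then have "bowen_dist act A x x \<le> 0" by (intro bowen_le) auto
  moreover have "0 \<le> bowen_dist act A x x"
  proof -
    obtain g where "g \<in> A" using \<open>A \<noteq> {}\<close> by blast
    then show ?thesis using bowen_ge[OF \<open>finite A\<close> \<open>g \<in> A\<close>, of act x x] by simp
  qed
  ultimately show ?thesis by simp
qed

lemma diam_le_cover_diam: "finite U \<Longrightarrow> V \<in> U \<Longrightarrow> diameter V \<le> cover_diam U"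
  unfolding cover_diam_def by (rule Max_ge) auto

lemma cover_exists:
  fixes eps :: real
  assumes cpt: "compact (UNIV :: 'x::metric_space set)" and eps: "0 < eps"
  shows "\<exists>U0 :: 'x set set. open_cover U0 \<and> cover_diam U0 \<le> eps \<and> ereal (eps / 4) \<le> cover_leb U0"
proof -
  have "(UNIV :: 'x set) \<subseteq> (\<Union>x\<in>UNIV. ball x (eps / 4))" using eps by auto
  then obtain K where K: "finite K" "(UNIV :: 'x set) \<subseteq> (\<Union>x\<in>K. ball x (eps / 4))"
    using compactE_image[OF cpt, of UNIV "\<lambda>x. ball x (eps / 4)"] by auto
  define U0 where "U0 = (\<lambda>x. ball x (eps / 2)) ` K"
  have near: "\<exists>p\<in>K. dist p x < eps / 4" for x
  proof -
    have "x \<in> (\<Union>x\<in>K. ball x (eps / 4))" using K(2) by blast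
    then show ?thesis by auto
  qed
  have Kne: "K \<noteq> {}" using near by blast
  have oc: "open_cover U0" unfolding open_cover_def U0_def
  proof (intro conjI)
    show "finite ((\<lambda>x. ball x (eps / 2)) ` K)" using K(1) by simp
    show "\<forall>V\<in>(\<lambda>x. ball x (eps / 2)) ` K. open V" by auto
    show "\<Union>((\<lambda>x. ball x (eps / 2)) ` K) = UNIV"
    proof (rule set_eqI)
      fix x
      obtain p where "p \<in> K" "dist p x < eps / 4" using near by blast
      then have "x \<in> ball p (eps / 2)" using eps by auto
      then show "x \<in> \<Union>((\<lambda>x. ball x (eps / 2)) ` K) \<longleftrightarrow> x \<in> UNIV" using \<open>p \<in> K\<close> by blast
    qed
  qed
  have diam: "cover_diam U0 \<le> eps"
    unfolding cover_diam_def
  proof (subst Max_le_iff)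
    show "finite (diameter ` U0)" unfolding U0_def using K(1) by simp
    show "diameter ` U0 \<noteq> {}" unfolding U0_def using Kne by simp
    show "\<forall>a\<in>diameter ` U0. a \<le> eps"
    proof
      fix a assume "a \<in> diameter ` U0"
      then obtain p where a: "a = diameter (ball p (eps / 2))" "p \<in> K" unfolding U0_def image_image by (rule imageE)
      have "diameter (ball p (eps / 2)) \<le> eps"
      proof (cases "ball p (eps / 2) = {}")
        case True then show ?thesis using eps by simp
      next
        case False
        have "(SUP (x, y)\<in>ball p (eps / 2) \<times> ball p (eps / 2). dist x y) \<le> eps"
        proof (rule cSUP_least)
          show "ball p (eps / 2) \<times> ball p (eps / 2) \<noteq> {}" using False by simp
          fix z assume "z \<in> ball p (eps / 2) \<times> ball p (eps / 2)"
          then obtain x y where z: "z = (x, y)" "dist p x < eps / 2" "dist p y < eps / 2" by auto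
          have "dist x y \<le> dist p x + dist p y" by (rule dist_triangle3)
          then show "(case z of (x, y) \<Rightarrow> dist x y) \<le> eps" using z by simp
        qed
        then show ?thesis using False unfolding diameter_def by simp
      qed
      then show "a \<le> eps" using a by simp
    qed
  qed
  have leb: "ereal (eps / 4) \<le> cover_leb U0"
    unfolding cover_leb_def
  proof (rule Sup_upper)
    have "\<forall>x. \<exists>V\<in>U0. ball x (eps / 4) \<subseteq> V"
    proof
      fix x
      obtain p where p: "p \<in> K" "dist p x < eps / 4" using near by blast
      have "ball x (eps / 4) \<subseteq> ball p (eps / 2)"
      proof
        fix y assume "y \<in> ball x (eps / 4)"
        then have "dist x y < eps / 4" by simp
        moreover have "dist p y \<le> dist p x + dist x y" by (rule dist_triangle)
        ultimately show "y \<in> ball p (eps / 2)" using p(2) by simp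
      qed
      moreover have "ball p (eps / 2) \<in> U0" unfolding U0_def using p(1) by (rule imageI)
      ultimately show "\<exists>V\<in>U0. ball x (eps / 4) \<subseteq> V" by blast
    qed
    then show "ereal (eps / 4) \<in> {ereal \<delta> |\<delta>. \<delta> > 0 \<and> (\<forall>x. \<exists>V\<in>U0. ball x \<delta> \<subseteq> V)}"
      using eps by (intro CollectI exI[of _ "eps / 4"]) simp
  qed
  show ?thesis using oc diam leb by blast
qed

locale csys = gsys act Z for act :: "'g::group_add \<Rightarrow> 'x::metric_space \<Rightarrow> 'x" and Z +
  assumes cpt: "compact (UNIV :: 'x set)"
begin

definition sepd :: "'g set \<Rightarrow> real \<Rightarrow> 'x set \<Rightarrow> bool" where
  "sepd A eps E \<longleftrightarrow> finite E \<and> E \<subseteq> Z \<and> (\<forall>x\<in>E. \<forall>y\<in>E. x \<noteq> y \<longrightarrow> bowen_dist act A x y > eps)"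

lemma sep_num_alt: "sep_num act Z A eps = Sup {card E | E. sepd A eps E}"
  unfolding sep_num_def sepd_def by simp

lemma bdd: "bounded (S :: 'x set)"
  using compact_imp_bounded[OF cpt] bounded_subset by blast

lemma sep_le_N:
  assumes A: "finite A" "A \<noteq> {}" and V: "open_cover V" "cover_diam V \<le> eps" and E: "sepd A eps E"
  shows "card E \<le> cover_num (join_cover act A V) Z"
proof -
  have Vfin: "finite V" and Vcov: "\<Union>V = UNIV" using V(1) unfolding open_cover_def by auto
  obtain W where W: "W \<subseteq> join_cover act A V" "Z \<subseteq> \<Union>W" "card W = cover_num (join_cover act A V) Z"
    using cover_num_attained[OF join_finite[OF A(1) Vfin] JZ[OF Vfin Vcov]] .
  have finW: "finite W" using W(1) join_finite[OF A(1) Vfin] finite_subset by blast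
  have Efin: "finite E" and EZ: "E \<subseteq> Z"
    and Esep: "\<And>x y. x \<in> E \<Longrightarrow> y \<in> E \<Longrightarrow> x \<noteq> y \<Longrightarrow> bowen_dist act A x y > eps"
    using E unfolding sepd_def by auto
  define w where "w e = (SOME S. S \<in> W \<and> e \<in> S)" for e
  have w: "w e \<in> W \<and> e \<in> w e" if "e \<in> E" for e
  proof -
    have "e \<in> \<Union>W" using W(2) EZ that by blast
    then have "\<exists>S. S \<in> W \<and> e \<in> S" by (simp only: Union_iff Bex_def)
    then show ?thesis unfolding w_def by (rule someI_ex)
  qed
  have "inj_on w E"
  proof (rule inj_onI, rule ccontr)
    fix x y assume x: "x \<in> E" and y: "y \<in> E" and wxy: "w x = w y" and ne: "x \<noteq> y"
    have S: "w x \<in> join_cover act A V" using w[OF x] W(1) by blast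
    then obtain c where c: "c \<in> A \<rightarrow> V" "w x = (\<Inter>g\<in>A. act g -` c g)" unfolding join_cover_def by blast
    have xin: "x \<in> (\<Inter>g\<in>A. act g -` c g)" using w[OF x] c(2) by simp
    have yin: "y \<in> (\<Inter>g\<in>A. act g -` c g)" using w[OF y] wxy c(2) by simp
    have "bowen_dist act A x y \<le> eps"
    proof (rule bowen_le[OF A])
      fix g assume g: "g \<in> A"
      have "act g x \<in> c g" "act g y \<in> c g" using xin yin g by auto
      then have "dist (act g x) (act g y) \<le> diameter (c g)" by (intro diameter_bounded_bound bdd)
      also have "\<dots> \<le> cover_diam V" using c(1) g Vfin by (intro diam_le_cover_diam) auto
      finally show "dist (act g x) (act g y) \<le> eps" using V(2) by linarith
    qed
    then show False using Esep[OF x y ne] by linarith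
  qed
  then have "card E = card (w ` E)" by (simp add: card_image)
  also have "\<dots> \<le> card W" by (rule card_mono[OF finW]) (use w in blast)
  finally show ?thesis using W(3) by linarith
qed

lemma sep_props:
  assumes A: "finite A" "A \<noteq> {}" and eps: "0 < eps"
  shows "\<exists>E. sepd A eps E \<and> card E = sep_num act Z A eps"
    and "\<And>E. sepd A eps E \<Longrightarrow> card E \<le> sep_num act Z A eps"
    and "1 \<le> sep_num act Z A eps"
proof -
  have "\<exists>U0 :: 'x set set. open_cover U0 \<and> cover_diam U0 \<le> eps \<and> ereal (eps / 4) \<le> cover_leb U0"
    by (rule cover_exists[OF cpt eps])
  then obtain V :: "'x set set" where V0: "open_cover V \<and> cover_diam V \<le> eps \<and> ereal (eps / 4) \<le> cover_leb V"
    by (rule exE)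
  have V: "open_cover V" "cover_diam V \<le> eps" using V0 by auto
  define S where "S = {card E | E. sepd A eps E}"
  have bnd: "\<forall>n\<in>S. n \<le> cover_num (join_cover act A V) Z"
    unfolding S_def using sep_le_N[OF A V(1,2)] by blast
  then have finS: "finite S" unfolding finite_nat_set_iff_bounded_le by blast
  have "sepd A eps {}" unfolding sepd_def by simp
  then have neS: "S \<noteq> {}" unfolding S_def by blast
  have eq: "sep_num act Z A eps = Max S" unfolding sep_num_alt S_def[symmetric] by (rule cSup_eq_Max[OF finS neS])
  have "Max S \<in> S" by (rule Max_in[OF finS neS])
  then obtain E where E: "Max S = card E \<and> sepd A eps E" unfolding S_def mem_Collect_eq by (rule exE)
  show "\<exists>E. sepd A eps E \<and> card E = sep_num act Z A eps"
    using E unfolding eq by (intro exI[of _ E]) simp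
  show le: "\<And>E. sepd A eps E \<Longrightarrow> card E \<le> sep_num act Z A eps"
  proof -
    fix E assume "sepd A eps E"
    then have "card E \<in> S" unfolding S_def by blast
    then show "card E \<le> sep_num act Z A eps" unfolding eq by (rule Max_ge[OF finS])
  qed
  obtain z where "z \<in> Z" using Zne by blast
  then have "sepd A eps {z}" unfolding sepd_def by simp
  then have "card {z} \<le> sep_num act Z A eps" by (rule le)
  then show "1 \<le> sep_num act Z A eps" by simp
qed

lemma sep_le_N':
  assumes A: "finite A" "A \<noteq> {}" and eps: "0 < eps" and V: "open_cover V" "cover_diam V \<le> eps"
  shows "sep_num act Z A eps \<le> cover_num (join_cover act A V) Z"
proof -
  obtain E where E: "sepd A eps E" "card E = sep_num act Z A eps" using sep_props(1)[OF A eps] by blast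
  show ?thesis using sep_le_N[OF A V E(1)] E(2) by linarith
qed

lemma N_le_sep:
  assumes A: "finite A" "A \<noteq> {}" and eps: "0 < eps" and U: "open_cover U" "ereal (eps / 4) \<le> cover_leb U"
  shows "cover_num (join_cover act A U) Z \<le> sep_num act Z A (eps / 8)"
proof -
  have eps8: "0 < eps / 8" using eps by simp
  obtain E where E: "sepd A (eps / 8) E" "card E = sep_num act Z A (eps / 8)" using sep_props(1)[OF A eps8] by blast
  have Efin: "finite E" and EZ: "E \<subseteq> Z"
    and Esep: "\<And>x y. x \<in> E \<Longrightarrow> y \<in> E \<Longrightarrow> x \<noteq> y \<Longrightarrow> bowen_dist act A x y > eps / 8"
    using E(1) unfolding sepd_def by auto
  have "ereal (eps / 8) < ereal (eps / 4)" using eps by simp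
  also have "\<dots> \<le> cover_leb U" by (rule U(2))
  finally have "ereal (eps / 8) < Sup {ereal \<delta> | \<delta>. \<delta> > 0 \<and> (\<forall>x. \<exists>V\<in>U. ball x \<delta> \<subseteq> V)}"
    unfolding cover_leb_def .
  then obtain y where y: "y \<in> {ereal \<delta> | \<delta>. \<delta> > 0 \<and> (\<forall>x. \<exists>V\<in>U. ball x \<delta> \<subseteq> V)}" "ereal (eps / 8) < y"
    unfolding less_Sup_iff by blast
  from y(1) obtain \<delta> where d: "y = ereal \<delta> \<and> \<delta> > 0 \<and> (\<forall>x. \<exists>V\<in>U. ball x \<delta> \<subseteq> V)"
    unfolding mem_Collect_eq by (rule exE)
  have dball: "\<forall>x. \<exists>V\<in>U. ball x \<delta> \<subseteq> V" using d by blast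
  have dgt: "eps / 8 < \<delta>" using y(2) d by simp
  define V where "V e g = (SOME S. S \<in> U \<and> ball (act g e) \<delta> \<subseteq> S)" for e g
  have Vp: "V e g \<in> U \<and> ball (act g e) \<delta> \<subseteq> V e g" for e g
  proof -
    have "\<exists>S. S \<in> U \<and> ball (act g e) \<delta> \<subseteq> S" using dball by (simp only: Bex_def)
    then show ?thesis unfolding V_def by (rule someI_ex)
  qed
  define W where "W = (\<lambda>e. \<Inter>g\<in>A. act g -` V e g) ` E"
  have WJ: "W \<subseteq> join_cover act A U"
  proof
    fix S assume "S \<in> W"
    then obtain e where S: "S = (\<Inter>g\<in>A. act g -` V e g)" "e \<in> E" unfolding W_def by (rule imageE)
    have "V e \<in> A \<rightarrow> U" using Vp by simp
    then show "S \<in> join_cover act A U" unfolding S(1) by (rule join_mem)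
  qed
  have "Z \<subseteq> \<Union>W"
  proof
    fix z assume z: "z \<in> Z"
    have "\<exists>e\<in>E. bowen_dist act A z e \<le> eps / 8"
    proof (rule ccontr)
      assume "\<not> ?thesis"
      then have far: "\<And>e. e \<in> E \<Longrightarrow> bowen_dist act A z e > eps / 8" by (simp add: not_le)
      have zE: "z \<notin> E"
      proof
        assume "z \<in> E"
        then have "eps / 8 < bowen_dist act A z z" by (rule far)
        then show False using bowen_self[OF A, of act z] eps by simp
      qed
      have "sepd A (eps / 8) (insert z E)" unfolding sepd_def
      proof (intro conjI ballI impI)
        show "finite (insert z E)" using Efin by simp
        show "insert z E \<subseteq> Z" using EZ z by simp
        fix x y assume x: "x \<in> insert z E" and y: "y \<in> insert z E" and xy: "x \<noteq> y"
        show "eps / 8 < bowen_dist act A x y"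
        proof (cases "x = z")
          case True
          then have "y \<in> E" using y xy by simp
          then show ?thesis using far True by simp
        next
          case False
          then have xE: "x \<in> E" using x by simp
          show ?thesis
          proof (cases "y = z")
            case True then show ?thesis using far[OF xE] bowen_sym[of act A z x] by simp
          next
            case False then show ?thesis using Esep[OF xE _ xy] y by simp
          qed
        qed
      qed
      then have "card (insert z E) \<le> sep_num act Z A (eps / 8)" by (rule sep_props(2)[OF A eps8])
      then show False using E(2) zE Efin by simp
    qed
    then obtain e where e: "e \<in> E" "bowen_dist act A z e \<le> eps / 8" by blast
    have "z \<in> (\<Inter>g\<in>A. act g -` V e g)"
    proof (rule INT_I)
      fix g assume g: "g \<in> A"
      have "dist (act g e) (act g z) \<le> eps / 8"
        using bowen_ge[OF A(1) g, of act z e] e(2) by (simp add: dist_commute)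
      then have "act g z \<in> ball (act g e) \<delta>" using dgt by simp
      then show "z \<in> act g -` V e g" using Vp[of e g] by blast
    qed
    moreover have "(\<Inter>g\<in>A. act g -` V e g) \<in> W" unfolding W_def using e(1) by (rule imageI)
    ultimately show "z \<in> \<Union>W" by (rule UnionI[rotated])
  qed
  then have "cover_num (join_cover act A U) Z \<le> card W" by (rule cover_num_le[OF WJ])
  also have "\<dots> \<le> card E" unfolding W_def by (rule card_image_le[OF Efin])
  finally show ?thesis using E(2) by linarith
qed

end

lemma ev01: "eventually (\<lambda>e::real. 0 < e \<and> e < 1) (at_right 0)"
  unfolding eventually_at_right_field by (intro exI[of _ 1]) auto

lemma q_lim: "((\<lambda>e::real. ln (8 / e) / ln (1 / e)) \<longlongrightarrow> 1) (at_right 0)"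
  by real_asymp

lemma close_le:
  fixes M L :: ereal
  assumes L0: "0 \<le> L" and H: "\<And>c. 1 < c \<Longrightarrow> M \<le> ereal c * L"
  shows "M \<le> L"
proof (rule ccontr)
  assume "\<not> M \<le> L"
  then have hML: "L < M" by simp
  then have Lfin: "L \<noteq> \<infinity>" by auto
  then obtain l where l: "L = ereal l" using L0 by (cases L) auto
  have l0: "0 \<le> l" using L0 l by simp
  obtain z where z: "ereal l < ereal z" "ereal z < M" using ereal_dense2[OF hML[unfolded l]] by blast
  show False
  proof (cases "l = 0")
    case True
    then have "M \<le> 0" using H[of 2] l by (simp add: zero_ereal_def)
    moreover have "ereal 0 < ereal z" using z(1) True by simp
    moreover have M0: "M \<le> ereal 0" using \<open>M \<le> 0\<close> by (simp add: zero_ereal_def)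
    have "ereal z < ereal 0" using z(2) M0 by (rule less_le_trans)
    then show False using \<open>ereal 0 < ereal z\<close> by simp
  next
    case False
    then have lp: "0 < l" using l0 by simp
    define c where "c = z / l"
    have c1: "1 < c" unfolding c_def using z(1) lp by (simp add: less_divide_eq)
    have "ereal c * L = ereal z" unfolding c_def l using lp by simp
    then show False using H[OF c1] z(2) by simp
  qed
qed

lemma limsup_mult_tendsto_le:
  fixes k :: "real \<Rightarrow> ereal" and q :: "real \<Rightarrow> real"
  assumes F: "F \<noteq> bot" and k0: "eventually (\<lambda>e. 0 \<le> k e) F" and q: "(q \<longlongrightarrow> 1) F"
  shows "Limsup F (\<lambda>e. ereal (q e) * k e) \<le> Limsup F k"
    and "Liminf F (\<lambda>e. ereal (q e) * k e) \<le> Liminf F k"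
proof -
  have Lim0: "0 \<le> Liminf F k" by (rule Liminf_bounded[OF k0])
  have Lsup0: "0 \<le> Limsup F k" using Lim0 Liminf_le_Limsup[OF F, of k] by simp
  have evc: "eventually (\<lambda>e. ereal (q e) * k e \<le> ereal c * k e) F" if c: "1 < c" for c
  proof -
    have "eventually (\<lambda>e. q e < c) F" using order_tendstoD(2)[OF q c] .
    moreover have "eventually (\<lambda>e. 0 < q e) F" using order_tendstoD(1)[OF q, of 0] by simp
    ultimately show ?thesis using k0
    proof eventually_elim
      case (elim e)
      then show ?case by (intro ereal_mult_right_mono) auto
    qed
  qed
  show "Limsup F (\<lambda>e. ereal (q e) * k e) \<le> Limsup F k"
  proof (rule close_le[OF Lsup0])
    fix c :: real assume c: "1 < c"
    have "Limsup F (\<lambda>e. ereal (q e) * k e) \<le> Limsup F (\<lambda>e. ereal c * k e)" by (rule Limsup_mono[OF evc[OF c]])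
    also have "\<dots> = ereal c * Limsup F k" using F c by (intro Limsup_ereal_mult_left) auto
    finally show "Limsup F (\<lambda>e. ereal (q e) * k e) \<le> ereal c * Limsup F k" .
  qed
  show "Liminf F (\<lambda>e. ereal (q e) * k e) \<le> Liminf F k"
  proof (rule close_le[OF Lim0])
    fix c :: real assume c: "1 < c"
    have "Liminf F (\<lambda>e. ereal (q e) * k e) \<le> Liminf F (\<lambda>e. ereal c * k e)" by (rule Liminf_mono[OF evc[OF c]])
    also have "\<dots> = ereal c * Liminf F k" using F c by (intro Liminf_ereal_mult_left) auto
    finally show "Liminf F (\<lambda>e. ereal (q e) * k e) \<le> ereal c * Liminf F k" .
  qed
qed

lemma filt8: "filtermap (\<lambda>e::real. e / 8) (at_right 0) = at_right 0"
proof -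
  have eq: "(\<lambda>e::real. e / 8) = (*) (1/8)" by (rule ext) simp
  show ?thesis unfolding eq using filtermap_times_pos_at_right[of "1/8::real" 0] by (simp only: mult_zero_right)
qed

lemma scale8:
  fixes f :: "real \<Rightarrow> ereal"
  shows "Limsup (at_right 0) (\<lambda>e. f (e / 8)) = Limsup (at_right 0) f"
    and "Liminf (at_right 0) (\<lambda>e. f (e / 8)) = Liminf (at_right 0) f"
proof -
  have inj: "inj (\<lambda>e::real. e / 8)" by (auto simp: inj_on_def)
  show "Limsup (at_right 0) (\<lambda>e. f (e / 8)) = Limsup (at_right 0) f"
    using Limsup_filtermap_eq[OF inj, of "at_right 0" f] unfolding filt8 by simp
  show "Liminf (at_right 0) (\<lambda>e. f (e / 8)) = Liminf (at_right 0) f"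
    using Liminf_filtermap_eq[OF inj, of "at_right 0" f] unfolding filt8 by simp
qed

lemma scaling:
  fixes S X :: "real \<Rightarrow> ereal"
  assumes SX: "\<And>e. 0 < e \<Longrightarrow> S e \<le> X e" and XS: "\<And>e. 0 < e \<Longrightarrow> X e \<le> S (e / 8)"
    and S0: "\<And>e. 0 < e \<Longrightarrow> 0 \<le> S e"
  shows "Limsup (at_right 0) (\<lambda>e. ereal (1 / ln (1 / e)) * S e) = Limsup (at_right 0) (\<lambda>e. ereal (1 / ln (1 / e)) * X e)"
    and "Liminf (at_right 0) (\<lambda>e. ereal (1 / ln (1 / e)) * S e) = Liminf (at_right 0) (\<lambda>e. ereal (1 / ln (1 / e)) * X e)"
proof -
  define f where "f e = ereal (1 / ln (1 / e)) * S e" for e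
  define P where "P e = ereal (1 / ln (1 / e)) * X e" for e
  define q where "q e = ln (8 / e) / ln (1 / e)" for e :: real
  have r0: "0 < 1 / ln (1 / e)" if "0 < e" "e < 1" for e :: real
    using that by (simp add: ln_div)
  have fP: "eventually (\<lambda>e. f e \<le> P e) (at_right 0)"
    using ev01
  proof eventually_elim
    case (elim e)
    then have "0 \<le> ereal (1 / ln (1 / e))" using r0[of e] by simp
    then show ?case unfolding f_def P_def by (intro ereal_mult_left_mono SX) (use elim in auto)
  qed
  have Pg: "eventually (\<lambda>e. P e \<le> ereal (q e) * f (e / 8)) (at_right 0)"
    using ev01
  proof eventually_elim
    case (elim e)
    then have e: "0 < e" "e < 1" by auto
    have "P e \<le> ereal (1 / ln (1 / e)) * S (e / 8)" unfolding P_def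
      by (intro ereal_mult_left_mono XS e(1)) (use r0[OF e] in auto)
    also have "ereal (1 / ln (1 / e)) = ereal (q e) * ereal (1 / ln (1 / (e / 8)))"
    proof -
      have a: "ln (1 / (e / 8)) = ln (8 / e)" by simp
      have "0 < ln (8 / e)" using e by simp
      moreover have "0 < ln (1 / e)" using e by (simp add: ln_div)
      ultimately show ?thesis unfolding q_def a by simp
    qed
    finally show ?case unfolding f_def by (simp add: mult.assoc[symmetric])
  qed
  have k0: "eventually (\<lambda>e. 0 \<le> f (e / 8)) (at_right 0)"
    using ev01
  proof eventually_elim
    case (elim e)
    then have "0 \<le> ereal (1 / ln (1 / (e / 8)))" using r0[of "e / 8"] by simp
    moreover have "0 \<le> S (e / 8)" using elim by (intro S0) simp
    ultimately show ?case unfolding f_def by (rule ereal_0_le_mult)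
  qed
  have F: "at_right (0::real) \<noteq> bot" by simp
  show "Limsup (at_right 0) (\<lambda>e. ereal (1 / ln (1 / e)) * S e) = Limsup (at_right 0) (\<lambda>e. ereal (1 / ln (1 / e)) * X e)"
    unfolding f_def[symmetric] P_def[symmetric]
  proof (rule antisym)
    show "Limsup (at_right 0) f \<le> Limsup (at_right 0) P" by (rule Limsup_mono[OF fP])
    have "Limsup (at_right 0) P \<le> Limsup (at_right 0) (\<lambda>e. ereal (q e) * f (e / 8))" by (rule Limsup_mono[OF Pg])
    also have "\<dots> \<le> Limsup (at_right 0) (\<lambda>e. f (e / 8))"
      by (rule limsup_mult_tendsto_le(1)[OF F k0]) (use q_lim in \<open>simp add: q_def\<close>)
    also have "\<dots> = Limsup (at_right 0) f" by (rule scale8)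
    finally show "Limsup (at_right 0) P \<le> Limsup (at_right 0) f" .
  qed
  show "Liminf (at_right 0) (\<lambda>e. ereal (1 / ln (1 / e)) * S e) = Liminf (at_right 0) (\<lambda>e. ereal (1 / ln (1 / e)) * X e)"
    unfolding f_def[symmetric] P_def[symmetric]
  proof (rule antisym)
    show "Liminf (at_right 0) f \<le> Liminf (at_right 0) P" by (rule Liminf_mono[OF fP])
    have "Liminf (at_right 0) P \<le> Liminf (at_right 0) (\<lambda>e. ereal (q e) * f (e / 8))" by (rule Liminf_mono[OF Pg])
    also have "\<dots> \<le> Liminf (at_right 0) (\<lambda>e. f (e / 8))"
      by (rule limsup_mult_tendsto_le(2)[OF F k0]) (use q_lim in \<open>simp add: q_def\<close>)
    also have "\<dots> = Liminf (at_right 0) f" by (rule scale8)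
    finally show "Liminf (at_right 0) P \<le> Liminf (at_right 0) f" .
  qed
qed

theorem proposition3p4:
  fixes act :: "'g::group_add \<Rightarrow> 'x::metric_space \<Rightarrow> 'x"
    and Z :: "'x set" and F :: "nat \<Rightarrow> 'g set"
  assumes "countable (UNIV :: 'g set)" and "infinite (UNIV :: 'g set)"
    and "compact (UNIV :: 'x set)"
    and "\<And>x. act 0 x = x"
    and "\<And>g h x. act (g + h) x = act g (act h x)"
    and "\<And>g. continuous_on UNIV (act g)"
    and "Z \<noteq> {}" and "\<And>g. act g ` Z = Z"
    and "folner F"
  shows "
    (upper_mdim_M act Z F = Limsup (at_right 0) (\<lambda>eps. ereal (1 / ln (1 / eps)) *
      (INF U\<in>{U. open_cover U \<and> cover_diam U \<le> eps}. ereal (h_top act F Z U)))) \<and>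
    (lower_mdim_M act Z F = Liminf (at_right 0) (\<lambda>eps. ereal (1 / ln (1 / eps)) *
      (INF U\<in>{U. open_cover U \<and> cover_diam U \<le> eps}. ereal (h_top act F Z U)))) \<and>
    (upper_mdim_M act Z F = Limsup (at_right 0) (\<lambda>eps. ereal (1 / ln (1 / eps)) *
      (SUP U\<in>{U. open_cover U \<and> cover_diam U \<le> eps \<and> cover_leb U \<ge> ereal (eps / 4)}.
         ereal (h_top act F Z U)))) \<and>
    (lower_mdim_M act Z F = Liminf (at_right 0) (\<lambda>eps. ereal (1 / ln (1 / eps)) *
      (SUP U\<in>{U. open_cover U \<and> cover_diam U \<le> eps \<and> cover_leb U \<ge> ereal (eps / 4)}.
         ereal (h_top act F Z U)))) \<and>
    (upper_mdim_M act Z F = Limsup (at_right 0) (\<lambda>eps. ereal (1 / ln (1 / eps)) *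
      (SUP U\<in>{U. open_cover U \<and> cover_leb U \<ge> ereal (eps / 4)}. ereal (h_top act F Z U)))) \<and>
    (lower_mdim_M act Z F = Liminf (at_right 0) (\<lambda>eps. ereal (1 / ln (1 / eps)) *
      (SUP U\<in>{U. open_cover U \<and> cover_leb U \<ge> ereal (eps / 4)}. ereal (h_top act F Z U))))"
proof -
  note A = assms
  interpret csys act Z
    by unfold_locales (use A in auto)
  define S where "S eps = limsup (\<lambda>n. ereal (ln (real (sep_num act Z (F n) eps)) / real (card (F n))))" for eps
  have up: "upper_mdim_M act Z F = Limsup (at_right 0) (\<lambda>e. ereal (1 / ln (1 / e)) * S e)"
    unfolding upper_mdim_M_def S_def ..
  have low: "lower_mdim_M act Z F = Liminf (at_right 0) (\<lambda>e. ereal (1 / ln (1 / e)) * S e)"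
    unfolding lower_mdim_M_def S_def ..
  have fol: "folner F" by (rule A(9))
  have fin: "\<And>n. finite (F n)" and ne: "\<And>n. F n \<noteq> {}" using folner_basic[OF fol] by auto
  have cpos: "\<And>n. 0 < real (card (F n))" using fin ne by (simp add: card_gt_0_iff)
  have limh: "limsup (\<lambda>n. ereal (ln (real (cover_num (join_cover act (F n) U) Z)) / real (card (F n)))) = ereal (h_top act F Z U)"
    if U: "open_cover U" for U
  proof -
    have Uf: "finite U" and Uc: "\<Union>U = UNIV" using U unfolding open_cover_def by auto
    have "(\<lambda>n. ln (real (cover_num (join_cover act (F n) U) Z)) / real (card (F n))) \<longlonglongrightarrow> h_top act F Z U"
      by (rule h_top_lim[OF Uf Uc fol])
    then have "(\<lambda>n. ereal (ln (real (cover_num (join_cover act (F n) U) Z)) / real (card (F n)))) \<longlonglongrightarrow> ereal (h_top act F Z U)"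
      by simp
    then show ?thesis by (intro lim_imp_Limsup) simp_all
  qed
  have lowb: "S eps \<le> ereal (h_top act F Z U)" if eps: "0 < eps" and U: "open_cover U" "cover_diam U \<le> eps" for eps U
  proof -
    have "S eps \<le> limsup (\<lambda>n. ereal (ln (real (cover_num (join_cover act (F n) U) Z)) / real (card (F n))))"
      unfolding S_def
    proof (rule Limsup_mono, rule always_eventually, rule allI)
      fix n
      have s1: "1 \<le> sep_num act Z (F n) eps" by (rule sep_props(3)[OF fin ne eps])
      have sN: "sep_num act Z (F n) eps \<le> cover_num (join_cover act (F n) U) Z"
        by (rule sep_le_N'[OF fin ne eps U])
      have "ln (real (sep_num act Z (F n) eps)) \<le> ln (real (cover_num (join_cover act (F n) U) Z))"
        using s1 sN by (subst ln_le_cancel_iff) auto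
      then show "ereal (ln (real (sep_num act Z (F n) eps)) / real (card (F n)))
          \<le> ereal (ln (real (cover_num (join_cover act (F n) U) Z)) / real (card (F n)))"
        using cpos[of n] by (simp add: divide_right_mono)
    qed
    then show ?thesis using limh[OF U(1)] by simp
  qed
  have upb: "ereal (h_top act F Z U) \<le> S (eps / 8)" if eps: "0 < eps" and U: "open_cover U" "ereal (eps / 4) \<le> cover_leb U" for eps U
  proof -
    have e8: "0 < eps / 8" using eps by simp
    have "limsup (\<lambda>n. ereal (ln (real (cover_num (join_cover act (F n) U) Z)) / real (card (F n)))) \<le> S (eps / 8)"
      unfolding S_def
    proof (rule Limsup_mono, rule always_eventually, rule allI)
      fix n
      have Uf: "finite U" and Uc: "\<Union>U = UNIV" using U unfolding open_cover_def by auto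
      have s1: "1 \<le> cover_num (join_cover act (F n) U) Z" by (rule N_pos[OF Uf Uc fin])
      have sN: "cover_num (join_cover act (F n) U) Z \<le> sep_num act Z (F n) (eps / 8)"
        by (rule N_le_sep[OF fin ne eps U])
      have "ln (real (cover_num (join_cover act (F n) U) Z)) \<le> ln (real (sep_num act Z (F n) (eps / 8)))"
        using s1 sN by (subst ln_le_cancel_iff) auto
      then show "ereal (ln (real (cover_num (join_cover act (F n) U) Z)) / real (card (F n)))
          \<le> ereal (ln (real (sep_num act Z (F n) (eps / 8))) / real (card (F n)))"
        using cpos[of n] by (simp add: divide_right_mono)
    qed
    then show ?thesis using limh[OF U(1)] by simp
  qed
  have S0: "0 \<le> S eps" if eps: "0 < eps" for eps
  proof -
    have "0 \<le> liminf (\<lambda>n. ereal (ln (real (sep_num act Z (F n) eps)) / real (card (F n))))"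
    proof (rule Liminf_bounded, rule always_eventually, rule allI)
      fix n
      have "1 \<le> sep_num act Z (F n) eps" by (rule sep_props(3)[OF fin ne eps])
      then have "0 \<le> ln (real (sep_num act Z (F n) eps))" by simp
      then show "0 \<le> ereal (ln (real (sep_num act Z (F n) eps)) / real (card (F n)))" by simp
    qed
    also have "\<dots> \<le> S eps" unfolding S_def by (rule Liminf_le_Limsup) simp
    finally show ?thesis .
  qed
  have U0: "\<exists>U0 :: 'x set set. open_cover U0 \<and> cover_diam U0 \<le> eps \<and> ereal (eps / 4) \<le> cover_leb U0"
    if "0 < eps" for eps
    by (rule cover_exists[OF A(3) that])
  have X1a: "S eps \<le> (INF U\<in>{U. open_cover U \<and> cover_diam U \<le> eps}. ereal (h_top act F Z U))" if "0 < eps" for eps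
    by (rule INF_greatest) (use lowb[OF that] in auto)
  have X1b: "(INF U\<in>{U. open_cover U \<and> cover_diam U \<le> eps}. ereal (h_top act F Z U)) \<le> S (eps / 8)" if e: "0 < eps" for eps
  proof -
    obtain V :: "'x set set" where V: "open_cover V \<and> cover_diam V \<le> eps \<and> ereal (eps / 4) \<le> cover_leb V"
      using U0[OF e] by (rule exE)
    have "(INF U\<in>{U. open_cover U \<and> cover_diam U \<le> eps}. ereal (h_top act F Z U)) \<le> ereal (h_top act F Z V)"
      by (rule INF_lower) (use V in auto)
    also have "\<dots> \<le> S (eps / 8)" using upb[OF e] V by auto
    finally show ?thesis .
  qed
  have X2a: "S eps \<le> (SUP U\<in>{U. open_cover U \<and> cover_diam U \<le> eps \<and> cover_leb U \<ge> ereal (eps / 4)}. ereal (h_top act F Z U))" if e: "0 < eps" for eps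
  proof -
    obtain V :: "'x set set" where V: "open_cover V \<and> cover_diam V \<le> eps \<and> ereal (eps / 4) \<le> cover_leb V"
      using U0[OF e] by (rule exE)
    have "S eps \<le> ereal (h_top act F Z V)" using lowb[OF e] V by auto
    also have "\<dots> \<le> (SUP U\<in>{U. open_cover U \<and> cover_diam U \<le> eps \<and> cover_leb U \<ge> ereal (eps / 4)}. ereal (h_top act F Z U))"
      by (rule SUP_upper) (use V in auto)
    finally show ?thesis .
  qed
  have X2b: "(SUP U\<in>{U. open_cover U \<and> cover_diam U \<le> eps \<and> cover_leb U \<ge> ereal (eps / 4)}. ereal (h_top act F Z U)) \<le> S (eps / 8)" if "0 < eps" for eps
    by (rule SUP_least) (use upb[OF that] in auto)
  have X3a: "S eps \<le> (SUP U\<in>{U. open_cover U \<and> cover_leb U \<ge> ereal (eps / 4)}. ereal (h_top act F Z U))" if e: "0 < eps" for eps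
  proof -
    obtain V :: "'x set set" where V: "open_cover V \<and> cover_diam V \<le> eps \<and> ereal (eps / 4) \<le> cover_leb V"
      using U0[OF e] by (rule exE)
    have "S eps \<le> ereal (h_top act F Z V)" using lowb[OF e] V by auto
    also have "\<dots> \<le> (SUP U\<in>{U. open_cover U \<and> cover_leb U \<ge> ereal (eps / 4)}. ereal (h_top act F Z U))"
      by (rule SUP_upper) (use V in auto)
    finally show ?thesis .
  qed
  have X3b: "(SUP U\<in>{U. open_cover U \<and> cover_leb U \<ge> ereal (eps / 4)}. ereal (h_top act F Z U)) \<le> S (eps / 8)" if "0 < eps" for eps
    by (rule SUP_least) (use upb[OF that] in auto)
  note sc1 = scaling[of S "\<lambda>eps. INF U\<in>{U. open_cover U \<and> cover_diam U \<le> eps}. ereal (h_top act F Z U)", OF X1a X1b S0]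
  note sc2 = scaling[of S "\<lambda>eps. SUP U\<in>{U. open_cover U \<and> cover_diam U \<le> eps \<and> cover_leb U \<ge> ereal (eps / 4)}. ereal (h_top act F Z U)", OF X2a X2b S0]
  note sc3 = scaling[of S "\<lambda>eps. SUP U\<in>{U. open_cover U \<and> cover_leb U \<ge> ereal (eps / 4)}. ereal (h_top act F Z U)", OF X3a X3b S0]
  show ?thesis unfolding up low using sc1 sc2 sc3 by simp
qed

end
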